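(* Let $d$, $n$, $r$ be positive integers with $\gcd(d,n)=1$ and $n$ odd. Then, modulo $(1-aq^{r+d\langle -r/d\rangle_n})(1-bq^{d-r+d\langle (r-d)/d\rangle_n})$, $$ \sum_{k=0}^{n-1}\frac{(aq^r;q^d)_k\,(bq^{d-r};q^d)_k\,(x;q^{d})_k\, q^{dk}}{(q^d;q^d)_k\,(abq^{2d};q^{2d})_k} \equiv (-1)^{\langle -r/d\rangle_n}\sum_{k=0}^{n-1}\frac{(aq^r;q^d)_k\,(bq^{d-r};q^d)_k\,(-x;q^{d})_k\, q^{dk}}{(q^d;q^d)_k\,(abq^{2d};q^{2d})_k}. $$
   Context: $a,b,q,x$ are indeterminates. The $q$-shifted factorial is $(y;q)_0=1$ and $(y;q)_m=(1-y)(1-yq)\cdots(1-yq^{m-1})$ for $m\geqslant1$. $\langle y\rangle_m$ denotes the least non-negative residue modulo $m$ of a rational number $y$ whose denominator is coprime to $m$. For rational functions $A,B$ and a polynomial $P$, $A\equiv B\pmod P$ means $A-B=P\cdot C/D$ for polynomials $C,D$ with $D$ coprime to $P$. *)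

theory Defs
  imports "HOL-Computational_Algebra.Polynomial" "HOL-Computational_Algebra.Fraction_Field"
    "HOL-Number_Theory.Cong"
begin

text \<open>Polynomials over Q in the four indeterminates a, b, q, x (nested univariate polynomials),
  and rational functions as the fraction field.\<close>
type_synonym mpoly4 = "rat poly poly poly poly"
type_synonym rfun4 = "mpoly4 fract"

definition Va :: mpoly4 where "Va = [:[:[:[:0, 1:]:]:]:]"
definition Vb :: mpoly4 where "Vb = [:[:[:0, 1:]:]:]"
definition Vq :: mpoly4 where "Vq = [:[:0, 1:]:]"
definition Vx :: mpoly4 where "Vx = [:0, 1:]"

definition emb :: "mpoly4 \<Rightarrow> rfun4" where "emb p = Fract p 1"

definition qpoch :: "'a::comm_ring_1 \<Rightarrow> 'a \<Rightarrow> nat \<Rightarrow> 'a" where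
  "qpoch y p m = (\<Prod>i<m. (1 - y * p ^ i))"

text \<open>Least non-negative residue modulo m of a rational y (denominator coprime to m):
  the t in {0..<m} with y - t = u/v, m dvd u, v coprime to m.\<close>
definition lnres :: "rat \<Rightarrow> nat \<Rightarrow> nat" where
  "lnres y m = (THE t. t < m \<and>
      (let (u, v) = quotient_of (y - of_nat t) in coprime v (int m) \<and> int m dvd u))"

definition rcong :: "rfun4 \<Rightarrow> rfun4 \<Rightarrow> mpoly4 \<Rightarrow> bool" where
  "rcong A B P \<longleftrightarrow> (\<exists>C D. D \<noteq> 0 \<and> coprime D P \<and> A - B = emb P * emb C / emb D)"

text \<open>Polynomial associate of the factor (1 - y q^e) for an integer exponent e: for e < 0,
  1 - y q^e = q^e (q^{-e} - y) and q^e is a unit, so the modulus is q^{-e} - y.\<close>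
definition qfac :: "mpoly4 \<Rightarrow> int \<Rightarrow> mpoly4" where
  "qfac y e = (if e \<ge> 0 then 1 - y * Vq ^ nat e else Vq ^ nat (- e) - y)"

end

theory Submission
  imports Defs "HOL-Computational_Algebra.Polynomial_Factorial" "HOL-Computational_Algebra.Field_as_Ring"
begin


lemma qpoch_0[simp]: "qpoch y p 0 = 1" by (simp add: qpoch_def)
lemma qpoch_Suc: "qpoch y p (Suc k) = qpoch y p k * (1 - y * p^k)"
  by (simp add: qpoch_def)
lemma qpoch_Suc_shift: "qpoch y p (Suc k) = (1 - y) * qpoch (y*p) p k"
  unfolding qpoch_def prod.lessThan_Suc_shift by (simp add: mult.assoc)
lemma qpoch_shift1: "qpoch (v*p) p k * (1 - v) = qpoch v p k * (1 - v * p^k)"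
  using qpoch_Suc[of v p k] qpoch_Suc_shift[of v p k] by (simp add: mult.commute)

lemma qpoch_nz: "(\<And>i. i < k \<Longrightarrow> y * p^i \<noteq> (1::'a::idom)) \<Longrightarrow> qpoch y p k \<noteq> 0"
  unfolding qpoch_def by (subst prod_zero_iff) auto

lemma qpoch_inv_zero:
  assumes "(Q::'a::field) \<noteq> 0" "N < k" shows "qpoch (inverse Q ^ N) Q k = 0"
proof -
  have "1 - inverse Q ^ N * Q ^ N = 0" using assms(1) by (simp add: power_inverse)
  thus ?thesis unfolding qpoch_def using assms(2) by (subst prod_zero_iff) auto
qed

definition gen :: "'a::field \<Rightarrow> 'a \<Rightarrow> bool" where
  "gen Q c \<longleftrightarrow> Q \<noteq> 0 \<and> (\<forall>j>0. Q^j \<noteq> 1) \<and> (\<forall>i::int. c * Q powi i \<noteq> 1)"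

lemma gen_Q: "gen Q c \<Longrightarrow> Q \<noteq> 0" by (simp add: gen_def)
lemma gen_pow: "gen Q c \<Longrightarrow> j > 0 \<Longrightarrow> Q^j \<noteq> 1" by (simp add: gen_def)
lemma gen_invpow: "gen Q c \<Longrightarrow> j > 0 \<Longrightarrow> inverse Q^j \<noteq> 1"
  using gen_pow[of Q c j] by (simp add: power_inverse)
lemma gen_c: "gen Q c \<Longrightarrow> c * Q powi i \<noteq> 1" by (simp add: gen_def)
lemma gen_c2: "gen Q c \<Longrightarrow> c * (Q^j * inverse Q ^ N) \<noteq> 1"
proof -
  assume g: "gen Q c"
  have "Q powi (int j - int N) = Q^j / Q^N"
    using gen_Q[OF g] by (simp add: power_int_diff)
  hence "Q^j * inverse Q ^ N = Q powi (int j - int N)"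
    by (simp add: divide_inverse power_inverse)
  thus ?thesis using gen_c[OF g] by simp
qed
lemma gen_cQ: assumes g: "gen Q c" shows "gen Q (c*Q)"
proof -
  have Q: "Q \<noteq> 0" using g by (simp add: gen_def)
  have "c * Q * Q powi i \<noteq> 1" for i :: int
  proof -
    have "c * Q * Q powi i = c * Q powi (i+1)"
      using Q by (simp add: power_int_add_1 mult.assoc mult.commute)
    thus ?thesis using gen_c[OF g, of "i+1"] by (simp only: not_False_eq_True)
  qed
  thus ?thesis using g unfolding gen_def by blast
qed

definition bt :: "'a::field \<Rightarrow> nat \<Rightarrow> 'a \<Rightarrow> nat \<Rightarrow> 'a" where
  "bt Q N c k = qpoch (inverse Q ^ N) Q k * qpoch c Q k * Q^k /
     (qpoch Q Q k * qpoch (c * Q * inverse Q ^ N) (Q^2) k)"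

lemma qpoch_QQ_nz: "gen Q c \<Longrightarrow> qpoch Q Q k \<noteq> 0"
proof (rule qpoch_nz)
  fix i assume "gen Q c"
  thus "Q * Q^i \<noteq> 1" using gen_pow[of Q c "Suc i"] by simp
qed

lemma qpoch_den_nz: assumes "gen Q c" shows "qpoch (c * Q^j * inverse Q ^ N) (Q^2) k \<noteq> 0"
proof (rule qpoch_nz)
  fix i assume "i < k"
  have p: "(Q^2)^i = Q^(2*i)" by (simp add: power_mult)
  have e: "c * Q^j * inverse Q ^ N * (Q^2)^i = c * (Q^(j+2*i) * inverse Q^N)"
    unfolding p power_add by (simp add: mult_ac)
  show "c * Q^j * inverse Q ^ N * (Q^2)^i \<noteq> 1" unfolding e by (rule gen_c2[OF assms])
qed

lemma qpoch_den_nz1: assumes "gen Q c" shows "qpoch (c * Q * inverse Q ^ N) (Q^2) k \<noteq> 0"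
  using qpoch_den_nz[OF assms, of 1] by simp

lemma bt_tele:
  fixes N k :: nat
  assumes g: "gen Q c"
  defines "w \<equiv> inverse Q ^ (N+2)"
  defines "\<rho> \<equiv> c*(1 - w*Q)/(1 - c*Q*w)"
  defines "R \<equiv> \<lambda>k. - bt Q (N+2) c k * (1 - inverse Q ^ k)/(1 - w)"
  shows "bt Q (N+2) c k - \<rho> * bt Q N c k = R (Suc k) - R k"
proof -
  have Q: "Q \<noteq> 0" using g by (rule gen_Q)
  define v where "v = c*Q*w"
  define u where "u = Q^k"
  define A where "A = qpoch w Q k"
  define B where "B = qpoch v (Q^2) k"
  define C where "C = qpoch c Q k"
  define D where "D = qpoch Q Q k"
  have h1: "inverse Q^N = w*Q^2" using Q by (simp add: w_def power_add power_inverse power2_eq_square field_simps)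
  have h2: "c*Q*inverse Q^N = v*Q^2" using h1 by (simp add: v_def)
  have hA: "qpoch (w*Q^2) Q k * ((1-w)*(1-w*Q)) = A*(1-w*u)*(1-w*Q*u)"
  proof -
    have e1: "qpoch (w*Q) Q k * (1-w) = A*(1 - w*u)" using qpoch_shift1[of w Q k] by (simp add: A_def u_def)
    have e2: "qpoch (w*Q*Q) Q k * (1 - w*Q) = qpoch (w*Q) Q k * (1 - w*Q*u)"
      using qpoch_shift1[of "w*Q" Q k] by (simp add: u_def)
    have "qpoch (w*Q^2) Q k * ((1-w)*(1-w*Q)) = (qpoch (w*Q*Q) Q k * (1 - w*Q)) * (1-w)"
      by (simp add: power2_eq_square mult_ac)
    also have "\<dots> = (qpoch (w*Q) Q k * (1-w)) * (1 - w*Q*u)" using e2 by (simp add: mult_ac)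
    also have "\<dots> = A*(1-w*u)*(1-w*Q*u)" using e1 by simp
    finally show ?thesis .
  qed
  have hB: "qpoch (v*Q^2) (Q^2) k * (1-v) = B*(1 - v*u^2)"
    using qpoch_shift1[of v "Q^2" k] by (simp add: B_def u_def power_mult[symmetric] mult.commute)
  have nw: "1 - w \<noteq> 0" using gen_invpow[OF g, of "N+2"] by (simp add: w_def)
  have nwQ: "1 - w*Q \<noteq> 0"
  proof -
    have "w*Q = inverse Q ^ (N+1)" using Q by (simp add: w_def power_inverse)
    thus ?thesis using gen_invpow[OF g, of "N+1"] by simp
  qed
  have nv: "1 - v \<noteq> 0"
  proof -
    have "v = c * (Q^1 * inverse Q^(N+2))" by (simp add: v_def w_def mult_ac)
    thus ?thesis using gen_c2[OF g, of 1 "N+2"] by simp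
  qed
  have nvu: "1 - v*u^2 \<noteq> 0"
  proof -
    have "v*u^2 = c * (Q^(2*k+1) * inverse Q^(N+2))" by (simp add: v_def w_def u_def power_add power_mult mult_ac)
    thus ?thesis using gen_c2[OF g, of "2*k+1" "N+2"] by simp
  qed
  have nQu: "1 - Q*u \<noteq> 0" using gen_pow[OF g, of "Suc k"] by (simp add: u_def)
  have nu: "u \<noteq> 0" using Q by (simp add: u_def)
  have nD: "D \<noteq> 0" using qpoch_QQ_nz[OF g] by (simp add: D_def)
  have nB: "B \<noteq> 0" using qpoch_den_nz1[OF g, of "N+2"] by (simp add: B_def v_def w_def)
  have eAN: "qpoch (inverse Q^N) Q k = A*(1-w*u)*(1-w*Q*u) / ((1-w)*(1-w*Q))"
    unfolding h1 using hA nw nwQ by (subst eq_divide_eq) simp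
  have eBN: "qpoch (c*Q*inverse Q^N) (Q^2) k = B*(1 - v*u^2) / (1-v)"
    unfolding h2 using hB nv by (subst eq_divide_eq) simp
  define T where "T = A*C*u/(D*B)"
  define E1 where "E1 = 1 - w"
  define E2 where "E2 = 1 - w*Q"
  define E3 where "E3 = 1 - v"
  define E4 where "E4 = 1 - v*u^2"
  define E5 where "E5 = 1 - Q*u"
  note Es = E1_def E2_def E3_def E4_def E5_def
  have bN: "bt Q N c k = T * ((1-w*u)*(1-w*Q*u)*E3/(E1*E2*E4))"
    unfolding bt_def eAN eBN T_def using nw nwQ nv nvu nD nB unfolding Es
    by (simp add: C_def D_def u_def field_simps)
  have bN2: "bt Q (N+2) c k = T"
    by (simp add: T_def bt_def A_def B_def C_def D_def u_def v_def w_def)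
  have bN2S: "bt Q (N+2) c (Suc k) = T * ((1-w*u)*(1-c*u)*Q/(E5*E4))"
  proof -
    have "bt Q (N+2) c (Suc k) = (A*(1-w*u))*(C*(1-c*u))*(Q*u)/((D*(1-Q*u))*(B*(1-v*u^2)))"
      unfolding bt_def qpoch_Suc
      by (simp add: A_def B_def C_def D_def u_def v_def w_def power_mult[symmetric] mult.commute)
    thus ?thesis using nQu nvu nD nB unfolding T_def Es by (simp add: field_simps)
  qed
  have iu: "inverse Q ^ Suc k = inverse u * inverse Q" "inverse Q ^ k = inverse u"
    by (simp_all add: u_def power_inverse)
  have ne: "E1 \<noteq> 0" "E2 \<noteq> 0" "E3 \<noteq> 0" "E4 \<noteq> 0" "E5 \<noteq> 0"
    using nw nwQ nv nvu nQu unfolding Es by auto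
  have sc: "1 - c*E2/E3 * ((1-w*u)*(1-w*Q*u)*E3/(E1*E2*E4))
     = - ((1-w*u)*(1-c*u)*Q/(E5*E4)) * (1 - inverse u * inverse Q)/E1 + (1 - inverse u)/E1"
    using ne nu Q apply (simp add: field_simps) unfolding Es v_def apply algebra done
  have rho: "\<rho> = c*E2/E3" unfolding \<rho>_def Es v_def by (simp add: mult_ac)
  show ?thesis
    unfolding R_def rho bN bN2 bN2S iu E1_def[symmetric]
  proof -
    let ?X1 = "(1-w*u)*(1-w*Q*u)*E3/(E1*E2*E4)"
    let ?X2 = "(1-w*u)*(1-c*u)*Q/(E5*E4)"
    have "T - c*E2/E3 * (T * ?X1) = T * (1 - c*E2/E3 * ?X1)" by (simp add: algebra_simps)
    also have "\<dots> = T * (- ?X2 * (1 - inverse u * inverse Q)/E1 + (1 - inverse u)/E1)" unfolding sc ..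
    also have "\<dots> = - (T * ?X2) * (1 - inverse u * inverse Q) / E1 - - T * (1 - inverse u) / E1"
      by (simp add: algebra_simps add_divide_distrib diff_divide_distrib)
    finally show "T - c*E2/E3 * (T * ?X1) = - (T * ?X2) * (1 - inverse u * inverse Q) / E1 - - T * (1 - inverse u) / E1" .
  qed
qed



definition GG :: "'a::field \<Rightarrow> nat \<Rightarrow> 'a \<Rightarrow> 'a" where
  "GG Q N c = (\<Sum>k<Suc N. bt Q N c k)"

lemma bt_zero: "Q \<noteq> 0 \<Longrightarrow> N < k \<Longrightarrow> bt Q N c k = 0"
  by (simp add: bt_def qpoch_inv_zero)

lemma GG_rec:
  assumes g: "gen Q c"
  shows "GG Q (N+2) c = c*(1 - inverse Q ^ (N+2)*Q)/(1 - c*Q*inverse Q ^ (N+2)) * GG Q N c"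
proof -
  have Q: "Q \<noteq> 0" using gen_Q[OF g] .
  define w where "w = inverse Q ^ (N+2)"
  define \<rho> where "\<rho> = c*(1 - w*Q)/(1 - c*Q*w)"
  define R where "R = (\<lambda>k. - bt Q (N+2) c k * (1 - inverse Q ^ k)/(1 - w))"
  have ext: "(\<Sum>k<N+3. bt Q N c k) = (\<Sum>k<Suc N. bt Q N c k)"
  proof -
    have "(\<Sum>k<N+3. bt Q N c k) = (\<Sum>k<Suc N. bt Q N c k) + bt Q N c (N+1) + bt Q N c (N+2)"
      by (simp add: numeral_3_eq_3)
    thus ?thesis using bt_zero[OF Q, of N "N+1" c] bt_zero[OF Q, of N "N+2" c] by simp
  qed
  have "GG Q (N+2) c - \<rho> * GG Q N c = (\<Sum>k<N+3. bt Q (N+2) c k - \<rho> * bt Q N c k)"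
    unfolding GG_def sum_subtractf sum_distrib_left[symmetric] ext[symmetric]
    by (simp add: numeral_3_eq_3)
  also have "\<dots> = (\<Sum>k<N+3. R (Suc k) - R k)"
    using bt_tele[OF g, of N] unfolding w_def \<rho>_def R_def by simp
  also have "\<dots> = R (N+3) - R 0" by (rule sum_lessThan_telescope)
  also have "\<dots> = 0" using bt_zero[OF Q, of "N+2" "N+3" c] by (simp add: R_def)
  finally show ?thesis unfolding \<rho>_def w_def by simp
qed

lemma GG_1: assumes g: "gen Q c" shows "GG Q 1 c = 0"
proof -
  have Q: "Q \<noteq> 0" using gen_Q[OF g] .
  have c1: "1 - c \<noteq> 0" using gen_c[OF g, of 0] by simp
  have Q1: "1 - Q \<noteq> 0" using gen_pow[OF g, of 1] by simp
  have e: "(1 - inverse Q)*Q = -(1-Q)" using Q by (simp add: algebra_simps)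
  have "bt Q 1 c 1 = ((1 - inverse Q)*Q)*(1-c)/((1-Q)*(1-c))"
  proof -
    have cq: "Q * (c * inverse Q) = c" using Q by simp
    show ?thesis unfolding bt_def using Q by (simp add: qpoch_def cq mult_ac)
  qed
  also have "\<dots> = -1" unfolding e using c1 Q1 by (simp add: divide_eq_eq)
  finally have "bt Q 1 c 1 = -1" .
  thus ?thesis by (simp add: GG_def bt_def)
qed

lemma GG_odd: assumes g: "gen Q c" and o: "odd N" shows "GG Q N c = 0"
proof -
  obtain M where N: "N = 2*M+1" using o oddE by blast
  have "GG Q (2*M+1) c = 0" for M
  proof (induction M)
    case 0 show ?case using GG_1[OF g] by simp
  next
    case (Suc M)
    have "GG Q (2*Suc M+1) c = GG Q ((2*M+1)+2) c" by (simp add: algebra_simps)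
    thus ?case using GG_rec[OF g, of "2*M+1"] Suc by simp
  qed
  thus ?thesis using N by simp
qed



definition LP :: "'a::field \<Rightarrow> 'a \<Rightarrow> nat \<Rightarrow> 'a poly" where
  "LP Q y k = (\<Prod>i<k. [:1, -(y*Q^i):])"
definition SP :: "'a::field \<Rightarrow> nat \<Rightarrow> 'a \<Rightarrow> 'a \<Rightarrow> 'a poly" where
  "SP Q N c y = (\<Sum>k<Suc N. smult (bt Q N c k) (LP Q y k))"
definition PP :: "'a::field \<Rightarrow> nat \<Rightarrow> 'a \<Rightarrow> 'a \<Rightarrow> 'a poly" where
  "PP Q N c y = SP Q N c y - smult ((-1)^N) (SP Q N c (-y))"

lemma poly_LP: "poly (LP Q y k) z = qpoch (y*z) Q k"
  unfolding LP_def qpoch_def by (simp add: poly_prod mult_ac)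

lemma poly_SP: "poly (SP Q N c y) z = (\<Sum>k<Suc N. bt Q N c k * qpoch (y*z) Q k)"
  unfolding SP_def by (simp add: poly_sum poly_LP)

lemma LP_comp: "LP Q y k \<circ>\<^sub>p [:0, z:] = LP Q (y*z) k"
  unfolding LP_def by (simp add: pcompose_prod pcompose_pCons mult_ac)

lemma SP_comp: "SP Q N c y \<circ>\<^sub>p [:0, z:] = SP Q N c (y*z)"
  unfolding SP_def by (simp only: pcompose_sum pcompose_smult LP_comp)

lemma PP_comp: "PP Q N c y \<circ>\<^sub>p [:0, z:] = PP Q N c (y*z)"
  unfolding PP_def by (simp add: pcompose_diff pcompose_smult SP_comp)

lemma coeff_comp: "coeff (p \<circ>\<^sub>p [:0, z:]) j = z^j * coeff p j" for p :: "'a::field poly"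
proof (induction p arbitrary: j rule: pCons_induct)
  case 0 show ?case by simp
next
  case (pCons a p)
  show ?case
  proof (cases j)
    case 0 thus ?thesis by (simp add: pcompose_pCons)
  next
    case (Suc i) thus ?thesis using pCons.IH[of i] by (simp add: pcompose_pCons coeff_pCons)
  qed
qed

lemma LP_diff: "LP Q y (Suc j) - LP Q (Q*y) (Suc j) = [:0, -(y*(1 - Q^Suc j)):] * LP Q (Q*y) j"
proof -
  have a: "LP Q y (Suc j) = [:1, -y:] * LP Q (Q*y) j"
    unfolding LP_def prod.lessThan_Suc_shift by (simp add: mult_ac)
  have b: "LP Q (Q*y) (Suc j) = LP Q (Q*y) j * [:1, -(Q*y*Q^j):]"
    unfolding LP_def by simp
  have c: "[:1, -y:] - [:1, -(Q*y*Q^j):] = [:0, -(y*(1 - Q^Suc j)):]"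
    by (simp add: algebra_simps)
  show ?thesis unfolding a b c[symmetric] by algebra
qed

lemma alg1:
  fixes x y Q P R A1 A2 A3 A4 e f :: "'a::field"
  assumes "R = Q*P" "e \<noteq> 0" "A3 \<noteq> 0" "A4 \<noteq> 0" "f \<noteq> 0"
  shows "(x*A1)*(y*A2)*R/((A3*e)*(f*A4))*e = x*y*Q/f * (A1*A2*P/(A3*A4))"
  using assms by (simp add: field_simps)

lemma bt_shift:
  assumes g: "gen Q c"
  shows "bt Q (Suc M) c (Suc j) * (1 - Q^Suc j) =
    (1 - inverse Q ^ Suc M)*(1-c)*Q/(1 - c*Q*inverse Q ^ Suc M) * bt Q M (c*Q) j"
proof -
  have Q: "Q \<noteq> 0" using gen_Q[OF g] .
  have e1: "inverse Q ^ Suc M * Q = inverse Q ^ M" using Q by simp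
  have e2: "c * Q * inverse Q ^ Suc M * Q^2 = c * Q * Q * inverse Q ^ M"
    using Q by (simp add: power2_eq_square)
  have nQ: "1 - Q^Suc j \<noteq> 0" using gen_pow[OF g, of "Suc j"] by simp
  have nD: "qpoch Q Q j \<noteq> 0" using qpoch_QQ_nz[OF g] .
  have nB: "qpoch (c * Q * Q * inverse Q ^ M) (Q^2) j \<noteq> 0"
    using qpoch_den_nz[OF g, of 2 M j] by (simp add: power2_eq_square mult_ac)
  have nv: "1 - c*Q*inverse Q ^ Suc M \<noteq> 0"
    using gen_c2[OF g, of 1 "Suc M"] by (simp add: mult_ac)
  have s3: "qpoch Q Q (Suc j) = qpoch Q Q j * (1 - Q^Suc j)"
    by (simp add: qpoch_Suc)
  show ?thesis
    unfolding bt_def qpoch_Suc_shift[of "inverse Q ^ Suc M"] qpoch_Suc_shift[of c]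
      qpoch_Suc_shift[of "c * Q * inverse Q ^ Suc M"] s3 e1 e2
    by (rule alg1) (use nQ nD nB nv Q in simp_all)
qed

lemma SP_diff:
  fixes M :: nat
  assumes g: "gen Q c"
  defines "K \<equiv> (1 - inverse Q ^ Suc M)*(1-c)*Q/(1 - c*Q*inverse Q ^ Suc M)"
  shows "SP Q (Suc M) c y - SP Q (Suc M) c (Q*y) = [:0, -(y*K):] * SP Q M (c*Q) (Q*y)"
proof -
  have "SP Q (Suc M) c y - SP Q (Suc M) c (Q*y) =
     (\<Sum>k<Suc (Suc M). smult (bt Q (Suc M) c k) (LP Q y k - LP Q (Q*y) k))"
    unfolding SP_def by (simp add: sum_subtractf smult_diff_right)
  also have "\<dots> = (\<Sum>j<Suc M. smult (bt Q (Suc M) c (Suc j)) (LP Q y (Suc j) - LP Q (Q*y) (Suc j)))"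
    by (subst sum.lessThan_Suc_shift) (simp add: LP_def)
  also have "\<dots> = (\<Sum>j<Suc M. [:0, -(y*K):] * smult (bt Q M (c*Q) j) (LP Q (Q*y) j))"
  proof (rule sum.cong[OF refl])
    fix j
    have "smult (bt Q (Suc M) c (Suc j)) (LP Q y (Suc j) - LP Q (Q*y) (Suc j))
       = [:0, -(y*(bt Q (Suc M) c (Suc j) * (1 - Q^Suc j))):] * LP Q (Q*y) j"
      unfolding LP_diff by (simp add: mult_ac)
    also have "\<dots> = [:0, -(y*K):] * smult (bt Q M (c*Q) j) (LP Q (Q*y) j)"
      unfolding bt_shift[OF g] K_def by (simp add: mult_ac)
    finally show "smult (bt Q (Suc M) c (Suc j)) (LP Q y (Suc j) - LP Q (Q*y) (Suc j))
       = [:0, -(y*K):] * smult (bt Q M (c*Q) j) (LP Q (Q*y) j)" .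
  qed
  also have "\<dots> = [:0, -(y*K):] * SP Q M (c*Q) (Q*y)"
    unfolding SP_def by (simp only: sum_distrib_left)
  finally show ?thesis .
qed

lemma PP_diff:
  fixes M :: nat
  assumes g: "gen Q c"
  defines "K \<equiv> (1 - inverse Q ^ Suc M)*(1-c)*Q/(1 - c*Q*inverse Q ^ Suc M)"
  shows "PP Q (Suc M) c y - PP Q (Suc M) c (Q*y) = [:0, -(y*K):] * PP Q M (c*Q) (Q*y)"
proof -
  have d1: "SP Q (Suc M) c y - SP Q (Suc M) c (Q*y) = [:0, -(y*K):] * SP Q M (c*Q) (Q*y)"
    using SP_diff[OF g, of M y] unfolding K_def .
  have d2: "SP Q (Suc M) c (-y) - SP Q (Suc M) c (-(Q*y)) = - ([:0, -(y*K):] * SP Q M (c*Q) (-(Q*y)))"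
    using SP_diff[OF g, of M "-y"] unfolding K_def by simp
  have "PP Q (Suc M) c y - PP Q (Suc M) c (Q*y) =
     (SP Q (Suc M) c y - SP Q (Suc M) c (Q*y))
     - smult ((-1)^Suc M) (SP Q (Suc M) c (-y) - SP Q (Suc M) c (-(Q*y)))"
    unfolding PP_def by (simp add: smult_diff_right)
  also have "\<dots> = [:0, -(y*K):] * SP Q M (c*Q) (Q*y)
     - smult ((-1)^Suc M) (- ([:0, -(y*K):] * SP Q M (c*Q) (-(Q*y))))"
    unfolding d1 d2 ..
  also have "\<dots> = [:0, -(y*K):] * PP Q M (c*Q) (Q*y)"
    unfolding PP_def by (simp add: right_diff_distrib mult_smult_right)
  finally show ?thesis .
qed

lemma poly_SP0: "poly (SP Q N c y) 0 = GG Q N c"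
  by (simp add: poly_SP GG_def qpoch_def)

lemma PP_zero: "gen Q c \<Longrightarrow> PP Q N c y = 0"
proof (induction N arbitrary: c y)
  case 0 thus ?case by (simp add: PP_def SP_def LP_def)
next
  case (Suc M)
  have g: "gen Q c" by fact
  have IH: "PP Q M (c*Q) z = 0" for z using Suc.IH[OF gen_cQ[OF g]] .
  define p where "p = PP Q (Suc M) c 1"
  have "p - PP Q (Suc M) c Q = 0" using PP_diff[OF g, of M 1] IH unfolding p_def by simp
  hence p1: "PP Q (Suc M) c Q = p" by simp
  have p2: "p \<circ>\<^sub>p [:0, Q:] = p" using PP_comp[of Q "Suc M" c 1 Q] p1 unfolding p_def by simp
  have cj: "coeff p j = 0" for j
  proof (cases j)
    case 0
    have "coeff p 0 = poly p 0" by (simp add: poly_0_coeff_0)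
    also have "\<dots> = GG Q (Suc M) c - (-1)^Suc M * GG Q (Suc M) c"
      unfolding p_def PP_def by (simp add: poly_SP0)
    also have "\<dots> = 0"
    proof (cases "odd (Suc M)")
      case True thus ?thesis using GG_odd[OF g True] by simp
    next
      case False thus ?thesis by simp
    qed
    finally show ?thesis using 0 by simp
  next
    case (Suc i)
    have "coeff p j = Q^j * coeff p j" using coeff_comp[of p Q j] p2 by simp
    moreover have "Q^j \<noteq> 1" using gen_pow[OF g, of j] Suc by simp
    ultimately show ?thesis
      by (metis mult_cancel_right2)
  qed
  hence p0: "p = 0" by (simp add: poly_eq_iff)
  show ?case using PP_comp[of Q "Suc M" c 1 y] p0 unfolding p_def by simp
qed

theorem qid:
  assumes "gen Q c"
  shows "(\<Sum>k<Suc N. bt Q N c k * qpoch x Q k) = (-1)^N * (\<Sum>k<Suc N. bt Q N c k * qpoch (-x) Q k)"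
proof -
  have "poly (PP Q N c 1) x = 0" using PP_zero[OF assms] by simp
  thus ?thesis unfolding PP_def by (simp add: poly_SP)
qed



lemma T2:
  fixes g h :: "'a::factorial_ring_gcd poly"
  assumes "g dvd [:u:]" "u \<noteq> 0" "g dvd h" "is_unit (coeff h i)"
  shows "is_unit g"
proof -
  have "degree g = 0" using dvd_imp_degree_le[OF assms(1)] assms(2) by simp
  hence g: "g = [:coeff g 0:]" using degree_0_id by metis
  have "coeff g 0 dvd coeff h i" using assms(3) g const_poly_dvd_iff by metis
  hence "is_unit (coeff g 0)" using assms(4) dvd_trans by blast
  thus ?thesis using g is_unit_const_poly_iff by metis
qed

lemma coprime_const_lift:
  fixes u v :: "'a::factorial_ring_gcd"
  assumes "coprime u v" shows "coprime [:u:] [:v:]"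
proof -
  have ne: "u \<noteq> 0 \<or> v \<noteq> 0" using assms by auto
  show ?thesis unfolding coprime_def
  proof (intro allI impI)
    fix c assume cu: "c dvd [:u:]" and cv: "c dvd [:v:]"
    have "degree c = 0"
    proof (cases "u = 0")
      case True thus ?thesis using dvd_imp_degree_le[OF cv] ne by simp
    next
      case False thus ?thesis using dvd_imp_degree_le[OF cu] by simp
    qed
    hence c: "c = [:coeff c 0:]" using degree_0_id by metis
    have "coeff c 0 dvd u" "coeff c 0 dvd v" using cu cv c const_poly_dvd_const_poly_iff by metis+
    hence "is_unit (coeff c 0)" using assms coprime_def by blast
    thus "is_unit c" using c is_unit_const_poly_iff by metis
  qed
qed

lemma one_minus_dvd_pow: "(1 - z) dvd (1 - z^n)" for z :: "'a::comm_ring_1"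
  using power_diff_sumr2[of 1 n z] by simp

lemma diff_dvd_pow: "(x - y) dvd (x^n - y^n)" for x y :: "'a::comm_ring_1"
  using power_diff_sumr2[of x n y] by simp

abbreviation X3 :: "rat poly poly poly" where "X3 \<equiv> [:0, 1:]"

lemma coeff_cX: "coeff ([:\<mu>:] * X3^k) i = (if i = k then \<mu> else 0)"
  by (simp add: monom_altdef[symmetric] coeff_monom)

lemma coeff_one_minus: "0 < k \<Longrightarrow> coeff (1 - [:\<mu>:] * X3^k) 0 = 1"
  unfolding coeff_diff coeff_cX by simp

lemma coeff_X_minus: "0 < e \<Longrightarrow> coeff (X3^e - [:\<mu>:]) e = 1"
  using coeff_cX[of 1 e e] by (cases e) auto

lemma BB:
  fixes \<mu> \<nu> :: "rat poly poly"
  assumes "0 < k \<or> 0 < l" "\<nu>^k \<noteq> \<mu>^l"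
  shows "coprime (1 - [:\<mu>:]*X3^k) (1 - [:\<nu>:]*X3^l)"
  unfolding coprime_def
proof (intro allI impI)
  fix g assume g1: "g dvd 1 - [:\<mu>:]*X3^k" and g2: "g dvd 1 - [:\<nu>:]*X3^l"
  have "g dvd 1 - ([:\<mu>:]*X3^k)^l" using dvd_trans[OF g1 one_minus_dvd_pow] .
  moreover have "([:\<mu>:]*X3^k)^l = [:\<mu>^l:]*X3^(k*l)" by (simp only: power_mult_distrib poly_const_pow power_mult)
  ultimately have h1: "g dvd 1 - [:\<mu>^l:]*X3^(k*l)" by simp
  have "g dvd 1 - ([:\<nu>:]*X3^l)^k" using dvd_trans[OF g2 one_minus_dvd_pow] .
  moreover have "([:\<nu>:]*X3^l)^k = [:\<nu>^k:]*X3^(k*l)" by (simp only: power_mult_distrib poly_const_pow power_mult[symmetric] mult.commute)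
  ultimately have h2: "g dvd 1 - [:\<nu>^k:]*X3^(k*l)" by simp
  have "g dvd [:\<nu>^k:]*(1 - [:\<mu>^l:]*X3^(k*l)) - [:\<mu>^l:]*(1 - [:\<nu>^k:]*X3^(k*l))"
    by (rule dvd_diff[OF dvd_mult[OF h1] dvd_mult[OF h2]])
  moreover have "[:\<nu>^k:]*(1 - [:\<mu>^l:]*X3^(k*l)) - [:\<mu>^l:]*(1 - [:\<nu>^k:]*X3^(k*l)) = [:\<nu>^k - \<mu>^l:]"
    by (simp add: algebra_simps)
  ultimately have g3: "g dvd [:\<nu>^k - \<mu>^l:]" by simp
  have ne: "\<nu>^k - \<mu>^l \<noteq> 0" using assms(2) by simp
  show "is_unit g"
  proof (cases "0 < k")
    case True
    have "is_unit (coeff (1 - [:\<mu>:]*X3^k) 0)" unfolding coeff_one_minus[OF True] by simp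
    thus ?thesis by (rule T2[OF g3 ne g1])
  next
    case False hence "0 < l" using assms(1) by simp
    hence "is_unit (coeff (1 - [:\<nu>:]*X3^l) 0)" by (subst coeff_one_minus) simp_all
    thus ?thesis by (rule T2[OF g3 ne g2])
  qed
qed

lemma BB':
  fixes \<mu> \<nu> :: "rat poly poly"
  assumes "0 < e" "1 - \<nu>^e * \<mu>^l \<noteq> 0"
  shows "coprime (X3^e - [:\<mu>:]) (1 - [:\<nu>:]*X3^l)"
  unfolding coprime_def
proof (intro allI impI)
  fix g assume g1: "g dvd X3^e - [:\<mu>:]" and g2: "g dvd 1 - [:\<nu>:]*X3^l"
  have "g dvd (X3^e)^l - [:\<mu>:]^l" using dvd_trans[OF g1 diff_dvd_pow] .
  hence h1: "g dvd X3^(e*l) - [:\<mu>^l:]" by (simp add: poly_const_pow power_mult)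
  have "g dvd 1 - ([:\<nu>:]*X3^l)^e" using dvd_trans[OF g2 one_minus_dvd_pow] .
  moreover have "([:\<nu>:]*X3^l)^e = [:\<nu>^e:]*X3^(e*l)" by (simp only: power_mult_distrib poly_const_pow power_mult[symmetric] mult.commute)
  ultimately have h2: "g dvd 1 - [:\<nu>^e:]*X3^(e*l)" by simp
  have "g dvd (1 - [:\<nu>^e:]*X3^(e*l)) + [:\<nu>^e:]*(X3^(e*l) - [:\<mu>^l:])"
    by (rule dvd_add[OF h2 dvd_mult[OF h1]])
  moreover have "(1 - [:\<nu>^e:]*X3^(e*l)) + [:\<nu>^e:]*(X3^(e*l) - [:\<mu>^l:]) = [:1 - \<nu>^e * \<mu>^l:]"
    by (simp add: algebra_simps)
  ultimately have g3: "g dvd [:1 - \<nu>^e * \<mu>^l:]" by simp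
  show "is_unit g" using T2[OF g3 assms(2) g1, of e] coeff_X_minus[OF assms(1)] by simp
qed

lemma BB'':
  fixes \<mu> \<nu> :: "rat poly poly"
  assumes "0 < e" "\<nu>^e \<noteq> \<mu>^f"
  shows "coprime (X3^e - [:\<mu>:]) (X3^f - [:\<nu>:])"
  unfolding coprime_def
proof (intro allI impI)
  fix g assume g1: "g dvd X3^e - [:\<mu>:]" and g2: "g dvd X3^f - [:\<nu>:]"
  have "g dvd (X3^e)^f - [:\<mu>:]^f" using dvd_trans[OF g1 diff_dvd_pow] .
  hence h1: "g dvd X3^(e*f) - [:\<mu>^f:]" by (simp add: poly_const_pow power_mult)
  have "g dvd (X3^f)^e - [:\<nu>:]^e" using dvd_trans[OF g2 diff_dvd_pow] .
  moreover have "(X3^f)^e - [:\<nu>:]^e = X3^(e*f) - [:\<nu>^e:]" by (simp only: poly_const_pow power_mult[symmetric] mult.commute)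
  ultimately have h2: "g dvd X3^(e*f) - [:\<nu>^e:]" by simp
  have "g dvd (X3^(e*f) - [:\<mu>^f:]) - (X3^(e*f) - [:\<nu>^e:])"
    by (rule dvd_diff[OF h1 h2])
  moreover have "(X3^(e*f) - [:\<mu>^f:]) - (X3^(e*f) - [:\<nu>^e:]) = [:\<nu>^e - \<mu>^f:]"
    by (simp add: algebra_simps)
  ultimately have g3: "g dvd [:\<nu>^e - \<mu>^f:]" by simp
  have ne: "\<nu>^e - \<mu>^f \<noteq> 0" using assms(2) by simp
  show "is_unit g" using T2[OF g3 ne g1, of e] coeff_X_minus[OF assms(1)] by simp
qed

abbreviation a2 :: "rat poly poly" where "a2 \<equiv> [:[:0, 1:]:]"
abbreviation b2 :: "rat poly poly" where "b2 \<equiv> [:0, 1:]"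

lemma Va_eq: "Va = [:[:a2:]:]" by (simp add: Va_def)
lemma Vb_eq: "Vb = [:[:b2:]:]" by (simp add: Vb_def)
lemma Vq_eq: "Vq = [:X3:]" by (simp add: Vq_def)

lemma mono_eq: "a2^i * b2^j = monom (monom 1 i) j"
proof -
  have "a2^i = [:monom 1 i:]" by (simp add: poly_const_pow monom_altdef)
  moreover have "b2^j = monom 1 j" by (simp add: monom_altdef)
  ultimately show ?thesis by (simp add: smult_monom)
qed

lemma MI: "a2^i * b2^j = a2^i' * b2^j' \<longleftrightarrow> i = i' \<and> j = j'"
  unfolding mono_eq by (auto simp: monom_eq_iff')

lemma mono_pow: "(a2^i * b2^j)^k = a2^(i*k) * b2^(j*k)"
  by (simp add: power_mult_distrib power_mult)

lemma mono_mult: "(a2^i * b2^j) * (a2^i' * b2^j') = a2^(i+i') * b2^(j+j')"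
  by (simp add: power_add mult_ac)

lemma const_one_diff: "1 - [:y:] = [:1 - y:]"
  by (simp add: poly_eq_iff coeff_pCons split: nat.split)

lemma conv1: "1 - Va^i*Vb^j*Vq^k = [:1 - [:a2^i*b2^j:]*X3^k:]"
  by (simp add: Va_eq Vb_eq Vq_eq poly_const_pow const_one_diff)
lemma conv2: "Vq^e - Va^i*Vb^j = [:X3^e - [:a2^i*b2^j:]:]"
  by (simp add: Va_eq Vb_eq Vq_eq poly_const_pow)

lemma BBm:
  assumes "0 < k \<or> 0 < l" "(i2*k, j2*k) \<noteq> (i1*l, j1*l)"
  shows "coprime (1 - Va^i1*Vb^j1*Vq^k) (1 - Va^i2*Vb^j2*Vq^l)"
proof -
  have "(a2^i2*b2^j2)^k \<noteq> (a2^i1*b2^j1)^l" unfolding mono_pow MI using assms(2) by simp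
  thus ?thesis unfolding conv1 by (intro coprime_const_lift BB assms(1))
qed

lemma BB'm:
  assumes "0 < e" "(i2*e + i1*l, j2*e + j1*l) \<noteq> (0, 0)"
  shows "coprime (Vq^e - Va^i1*Vb^j1) (1 - Va^i2*Vb^j2*Vq^l)"
proof -
  have "(a2^i2*b2^j2)^e * (a2^i1*b2^j1)^l \<noteq> a2^0 * b2^0"
    unfolding mono_pow mono_mult MI using assms(2) by simp
  hence "1 - (a2^i2*b2^j2)^e * (a2^i1*b2^j1)^l \<noteq> 0" by simp
  thus ?thesis unfolding conv1 conv2 by (intro coprime_const_lift BB' assms(1))
qed

lemma BB''m:
  assumes "0 < e" "(i2*e, j2*e) \<noteq> (i1*f, j1*f)"
  shows "coprime (Vq^e - Va^i1*Vb^j1) (Vq^f - Va^i2*Vb^j2)"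
proof -
  have "(a2^i2*b2^j2)^e \<noteq> (a2^i1*b2^j1)^f" unfolding mono_pow MI using assms(2) by simp
  thus ?thesis unfolding conv2 by (intro coprime_const_lift BB'' assms(1))
qed

lemma Xm1:
  assumes "0 < l \<or> (i, j) \<noteq> (0, 0)"
  shows "coprime Vq (1 - Va^i*Vb^j*Vq^l)"
proof -
  have "1 - (a2^i*b2^j)^1 * 0^l \<noteq> 0"
  proof (cases "l = 0")
    case True
    have "a2^i*b2^j \<noteq> a2^0*b2^0" unfolding MI using assms True by simp
    thus ?thesis using True by simp
  qed (simp add: power_0_left)
  hence "coprime (X3^1 - [:0:]) (1 - [:a2^i*b2^j:]*X3^l)" by (intro BB') simp_all
  hence "coprime X3 (1 - [:a2^i*b2^j:]*X3^l)" by simp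
  hence "coprime [:X3:] [:1 - [:a2^i*b2^j:]*X3^l:]" by (rule coprime_const_lift)
  thus ?thesis unfolding conv1 unfolding Vq_eq .
qed

lemma Xm2: "0 < f \<Longrightarrow> coprime Vq (Vq^f - Va^i*Vb^j)"
proof -
  assume f: "0 < f"
  have "(a2^i*b2^j)^1 \<noteq> 0^f" using f by (simp add: mono_eq monom_eq_0_iff power_0_left)
  hence "coprime (X3^1 - [:0:]) (X3^f - [:a2^i*b2^j:])" by (intro BB'') simp_all
  hence "coprime X3 (X3^f - [:a2^i*b2^j:])" by simp
  hence "coprime [:X3:] [:X3^f - [:a2^i*b2^j:]:]" by (rule coprime_const_lift)
  thus ?thesis unfolding conv2 unfolding Vq_eq .
qed



lemma emb_mult: "emb (p*q) = emb p * emb q" by (simp add: emb_def)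
lemma emb_add: "emb (p+q) = emb p + emb q" by (simp add: emb_def)
lemma emb_diff: "emb (p-q) = emb p - emb q" by (simp add: emb_def)
lemma emb_minus: "emb (-p) = - emb p" by (simp add: emb_def)
lemma emb_1: "emb 1 = 1" by (simp add: emb_def One_fract_def)
lemma emb_0: "emb 0 = 0" by (simp add: emb_def Zero_fract_def)
lemma emb_pow: "emb (p^n) = emb p ^ n" by (induction n) (simp_all add: emb_1 emb_mult)
lemma emb_eq: "emb p = emb q \<longleftrightarrow> p = q" by (simp add: emb_def eq_fract)
lemma emb_eq0: "emb p = 0 \<longleftrightarrow> p = 0" using emb_eq[of p 0] emb_0 by simp
lemma emb_div: "D \<noteq> 0 \<Longrightarrow> emb C / emb D = Fract C D" by (simp add: emb_def)
lemmas emb_simps = emb_mult emb_add emb_diff emb_minus emb_1 emb_0 emb_pow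

definition Lc :: "mpoly4 \<Rightarrow> rfun4 \<Rightarrow> bool" where
  "Lc P z \<longleftrightarrow> (\<exists>C D. D \<noteq> 0 \<and> coprime D P \<and> z = emb C / emb D)"
definition Uc :: "mpoly4 \<Rightarrow> rfun4 \<Rightarrow> bool" where
  "Uc P z \<longleftrightarrow> (\<exists>C D. C \<noteq> 0 \<and> D \<noteq> 0 \<and> coprime C P \<and> coprime D P \<and> z = emb C / emb D)"
definition Mc :: "mpoly4 \<Rightarrow> mpoly4 \<Rightarrow> rfun4 \<Rightarrow> bool" where
  "Mc P Pm z \<longleftrightarrow> (\<exists>w. Lc P w \<and> z = emb Pm * w)"

lemma Lc_emb: "Lc P (emb p)"
  unfolding Lc_def by (rule exI[of _ p], rule exI[of _ 1]) (simp add: emb_1)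

lemma Lc_1: "Lc P 1" using Lc_emb[of P 1] by (simp add: emb_1)
lemma Lc_0: "Lc P 0" using Lc_emb[of P 0] by (simp add: emb_0)

lemma Lc_add: assumes "Lc P x" "Lc P y" shows "Lc P (x + y)"
proof -
  obtain C D C' D' where h: "D \<noteq> 0" "coprime D P" "x = emb C / emb D"
    "D' \<noteq> 0" "coprime D' P" "y = emb C' / emb D'" using assms unfolding Lc_def by blast
  have "x + y = emb (C*D' + C'*D) / emb (D*D')" using h by (simp add: emb_div)
  thus ?thesis unfolding Lc_def using h by (intro exI[of _ "C*D' + C'*D"] exI[of _ "D*D'"]) simp
qed

lemma Lc_mult: assumes "Lc P x" "Lc P y" shows "Lc P (x * y)"
proof -
  obtain C D C' D' where h: "D \<noteq> 0" "coprime D P" "x = emb C / emb D"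
    "D' \<noteq> 0" "coprime D' P" "y = emb C' / emb D'" using assms unfolding Lc_def by blast
  have "x * y = emb (C*C') / emb (D*D')" using h by (simp add: emb_div)
  thus ?thesis unfolding Lc_def using h by (intro exI[of _ "C*C'"] exI[of _ "D*D'"]) simp
qed

lemma Lc_minus: assumes "Lc P x" shows "Lc P (- x)"
proof -
  have "- x = emb (-1) * x" by (simp add: emb_minus emb_1)
  thus ?thesis using Lc_mult[OF Lc_emb assms] by simp
qed

lemma Lc_diff: "Lc P x \<Longrightarrow> Lc P y \<Longrightarrow> Lc P (x - y)"
  using Lc_add[of P x "-y"] Lc_minus[of P y] by simp

lemma Lc_pow: "Lc P x \<Longrightarrow> Lc P (x ^ n)"
  by (induction n) (simp_all add: Lc_1 Lc_mult)

lemma Uc_emb: "C \<noteq> 0 \<Longrightarrow> coprime C P \<Longrightarrow> Uc P (emb C)"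
  unfolding Uc_def by (rule exI[of _ C], rule exI[of _ 1]) (simp add: emb_1)

lemma Uc_Lc: "Uc P z \<Longrightarrow> Lc P z" unfolding Uc_def Lc_def by blast

lemma Uc_inv: "Uc P z \<Longrightarrow> Uc P (inverse z)"
  unfolding Uc_def by (metis inverse_divide)

lemma Uc_nz: "Uc P z \<Longrightarrow> z \<noteq> 0"
  unfolding Uc_def by (auto simp: emb_eq0)

lemma Uc_mult: assumes "Uc P x" "Uc P y" shows "Uc P (x * y)"
proof -
  obtain C D C' D' where h: "C \<noteq> 0" "D \<noteq> 0" "coprime C P" "coprime D P" "x = emb C / emb D"
    "C' \<noteq> 0" "D' \<noteq> 0" "coprime C' P" "coprime D' P" "y = emb C' / emb D'"
    using assms unfolding Uc_def by blast
  have "x * y = emb (C*C') / emb (D*D')" using h by (simp add: emb_div)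
  thus ?thesis unfolding Uc_def using h by (intro exI[of _ "C*C'"] exI[of _ "D*D'"]) simp
qed

lemma Uc_div: "Uc P x \<Longrightarrow> Uc P y \<Longrightarrow> Uc P (x / y)"
  by (simp add: divide_inverse Uc_mult Uc_inv)

lemma Uc_pow: "Uc P x \<Longrightarrow> Uc P (x ^ n)"
  by (induction n) (simp_all add: Uc_mult Uc_emb[of 1, simplified emb_1])

lemma Lc_div: "Lc P x \<Longrightarrow> Uc P y \<Longrightarrow> Lc P (x / y)"
  by (simp add: divide_inverse Lc_mult Uc_Lc Uc_inv)

lemma Mc_P: "Mc P Pm (emb Pm)" unfolding Mc_def using Lc_1 by force
lemma Mc_0: "Mc P Pm 0" unfolding Mc_def using Lc_0 by force
lemma Mc_add: "Mc P Pm x \<Longrightarrow> Mc P Pm y \<Longrightarrow> Mc P Pm (x + y)"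
  unfolding Mc_def by (metis Lc_add distrib_left)
lemma Mc_diff: "Mc P Pm x \<Longrightarrow> Mc P Pm y \<Longrightarrow> Mc P Pm (x - y)"
  unfolding Mc_def by (metis Lc_diff right_diff_distrib)
lemma Mc_mult: "Lc P y \<Longrightarrow> Mc P Pm x \<Longrightarrow> Mc P Pm (y * x)"
  unfolding Mc_def by (metis Lc_mult mult.left_commute)
lemma Mc_mult2: "Lc P y \<Longrightarrow> Mc P Pm x \<Longrightarrow> Mc P Pm (x * y)"
  using Mc_mult by (metis mult.commute)
lemma Mc_sum: "(\<And>k. k \<in> A \<Longrightarrow> Mc P Pm (f k)) \<Longrightarrow> Mc P Pm (sum f A)"
  by (induction A rule: infinite_finite_induct) (simp_all add: Mc_0 Mc_add)
lemma Lc_sum: "(\<And>k. k \<in> A \<Longrightarrow> Lc P (f k)) \<Longrightarrow> Lc P (sum f A)"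
  by (induction A rule: infinite_finite_induct) (simp_all add: Lc_0 Lc_add)

lemma qpoch_Lc: "Lc P y \<Longrightarrow> Lc P p \<Longrightarrow> Lc P (qpoch y p k)"
  by (induction k) (simp_all add: qpoch_Suc Lc_1 Lc_mult Lc_diff Lc_pow)

lemma qpoch_Uc: "(\<And>i. i < k \<Longrightarrow> Uc P (1 - y * p^i)) \<Longrightarrow> Uc P (qpoch y p k)"
  by (induction k) (simp_all add: qpoch_Suc Uc_mult Uc_emb[of 1, simplified emb_1])

lemma qpoch_Mc:
  assumes "Lc P y" "Lc P y'" "Lc P p" "Mc P Pm (y - y')"
  shows "Mc P Pm (qpoch y p k - qpoch y' p k)"
proof (induction k)
  case 0 show ?case by (simp add: Mc_0)
next
  case (Suc k)
  have e: "qpoch y p (Suc k) - qpoch y' p (Suc k) =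
     (1 - y * p^k) * (qpoch y p k - qpoch y' p k) + (- (qpoch y' p k * p^k)) * (y - y')"
    by (simp add: qpoch_Suc algebra_simps)
  show ?case unfolding e
    by (intro Mc_add Mc_mult Suc assms Lc_diff Lc_1 Lc_mult Lc_pow Lc_minus qpoch_Lc)
qed

lemma frac_Mc:
  assumes "Mc P Pm (n1 - n2)" "Lc P n1" "Lc P n2" "Uc P d1" "Uc P d2" "Mc P Pm (d1 - d2)"
  shows "Mc P Pm (n1/d1 - n2/d2)"
proof -
  have nz: "d1 \<noteq> 0" "d2 \<noteq> 0" using assms Uc_nz by auto
  have e: "n1/d1 - n2/d2 = inverse (d1*d2) * (d2 * (n1 - n2) + (- n2) * (d1 - d2))"
    using nz by (simp add: field_simps)
  show ?thesis unfolding e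
    by (intro Mc_mult Mc_add Lc_minus assms Uc_Lc Uc_inv Uc_mult)
qed

lemma combine:
  assumes cp: "coprime P1 P2" and L: "Lc (P1*P2) z" and M1: "Mc P1 P1 z" and M2: "Mc P2 P2 z"
  shows "\<exists>C D. D \<noteq> 0 \<and> coprime D (P1*P2) \<and> z = emb (P1*P2) * emb C / emb D"
proof -
  obtain E D0 where h0: "D0 \<noteq> 0" "coprime D0 (P1*P2)" "z = emb E / emb D0"
    using L unfolding Lc_def by blast
  have dv: "P dvd E" if M: "Mc P P z" and cD: "coprime D0 P" for P
  proof -
    obtain C D where h: "D \<noteq> 0" "coprime D P" "z = emb P * (emb C / emb D)"
      using M unfolding Mc_def Lc_def by blast
    have "emb E / emb D0 = emb P * (emb C / emb D)" using h h0 by simp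
    hence "emb (E * D) = emb (P * C * D0)" using h(1) h0(1) by (simp add: emb_simps emb_eq0 field_simps)
    hence "E * D = P * C * D0" by (simp add: emb_eq)
    hence "P dvd E * D" by (metis dvd_triv_left mult.assoc)
    thus ?thesis using h(2) by (simp add: coprime_commute coprime_dvd_mult_left_iff)
  qed
  have "P1 dvd E" using dv[OF M1] h0(2) by simp
  moreover have "P2 dvd E" using dv[OF M2] h0(2) by simp
  ultimately have "P1 * P2 dvd E" using cp by (simp add: divides_mult)
  then obtain C where "E = P1 * P2 * C" by blast
  thus ?thesis using h0 by (intro exI[of _ C] exI[of _ D0]) (simp add: emb_mult)
qed



lemma qpoch_add: "qpoch y p (m + l) = qpoch y p m * qpoch (y * p^m) p l"
proof (induction l)
  case 0 show ?case by simp
next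
  case (Suc l)
  have "qpoch y p (m + Suc l) = qpoch y p (m + l) * (1 - y * p^(m+l))" by (simp add: qpoch_Suc)
  also have "\<dots> = qpoch y p m * (qpoch (y * p^m) p l * (1 - y * p^m * p^l))"
    unfolding Suc.IH by (simp add: power_add mult.assoc)
  also have "\<dots> = qpoch y p m * qpoch (y * p^m) p (Suc l)" by (simp add: qpoch_Suc)
  finally show ?case .
qed

lemma qpoch_split: "N < k \<Longrightarrow> qpoch u p k = (1 - u * p^N) * (qpoch u p N * qpoch (u * p^Suc N) p (k - Suc N))"
proof -
  assume "N < k"
  then obtain l where "k = Suc (N + l)" using less_imp_Suc_add by blast
  hence k: "k = Suc N + l" by simp
  show ?thesis unfolding k qpoch_add by (simp add: qpoch_Suc)
qed

lemma side:
  fixes P :: mpoly4 and Q u w x D0 lam :: rfun4 and N n :: nat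
  defines "T \<equiv> \<lambda>y k. qpoch u Q k * qpoch w Q k * qpoch y Q k * Q^k / (qpoch Q Q k * qpoch D0 (Q^2) k)"
  assumes Nn: "N < n"
    and Lu: "Lc P u" and Lw: "Lc P w" and Lx: "Lc P x" and UQ: "Uc P Q"
    and U1: "\<And>i. Uc P (1 - Q * Q^i)"
    and U2: "\<And>i. Uc P (1 - D0 * (Q^2)^i)"
    and U3: "\<And>i. Uc P (1 - w*Q*inverse Q^N * (Q^2)^i)"
    and Mu: "Mc P P (1 - u * Q^N)"
    and lam: "D0 - w*Q*inverse Q^N = lam * (u - inverse Q^N)" and Llam: "Lc P lam"
    and g: "gen Q w"
  shows "Mc P P ((\<Sum>k<n. T x k) - (-1)^N * (\<Sum>k<n. T (-x) k))"
proof -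
  have LQ: "Lc P Q" using Uc_Lc[OF UQ] .
  have LiQ: "Lc P (inverse Q ^ N)" using Lc_pow[OF Uc_Lc[OF Uc_inv[OF UQ]]] .
  have Qnz: "Q \<noteq> 0" using Uc_nz[OF UQ] .
  have Mu2: "Mc P P (u - inverse Q^N)"
  proof -
    have iq: "inverse Q^N * Q^N = 1" using Qnz by (simp add: power_inverse)
    have "(- (inverse Q^N)) * (1 - u * Q^N) = - (inverse Q^N) + u * (inverse Q^N * Q^N)"
      by (simp add: algebra_simps)
    also have "\<dots> = u - inverse Q^N" by (simp add: iq)
    finally have "u - inverse Q^N = (- (inverse Q^N)) * (1 - u * Q^N)" by simp
    thus ?thesis using Mc_mult[OF Lc_minus[OF LiQ] Mu] by simp
  qed
  have main: "Mc P P ((\<Sum>k<n. T y k) - (\<Sum>k<Suc N. bt Q N w k * qpoch y Q k))" if Ly: "Lc P y" for y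
  proof -
    have LT: "Lc P (qpoch w Q k * qpoch y Q k * Q^k)" for k
      by (intro Lc_mult qpoch_Lc Lc_pow Lw Ly LQ)
    have Ud1: "Uc P (qpoch Q Q k * qpoch D0 (Q^2) k)" for k
      by (intro Uc_mult qpoch_Uc U1 U2)
    have Ud2: "Uc P (qpoch Q Q k * qpoch (w*Q*inverse Q^N) (Q^2) k)" for k
      by (intro Uc_mult qpoch_Uc U1 U3)
    have low: "Mc P P (T y k - bt Q N w k * qpoch y Q k)" for k
    proof -
      have e: "bt Q N w k * qpoch y Q k = qpoch (inverse Q^N) Q k * (qpoch w Q k * qpoch y Q k * Q^k)
          / (qpoch Q Q k * qpoch (w*Q*inverse Q^N) (Q^2) k)"
        by (simp add: bt_def mult_ac)
      have e2: "T y k = qpoch u Q k * (qpoch w Q k * qpoch y Q k * Q^k) / (qpoch Q Q k * qpoch D0 (Q^2) k)"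
        by (simp add: T_def mult_ac)
      have m1: "Mc P P (qpoch u Q k - qpoch (inverse Q^N) Q k)"
        by (rule qpoch_Mc[OF Lu LiQ LQ Mu2])
      have m2: "Mc P P (qpoch D0 (Q^2) k - qpoch (w*Q*inverse Q^N) (Q^2) k)"
      proof (rule qpoch_Mc)
        show "Lc P D0" using Uc_Lc[OF U2[of 0]] Lc_diff[OF Lc_1, of P "1 - D0"] by simp
        show "Lc P (w*Q*inverse Q^N)" by (intro Lc_mult Lw LQ LiQ)
        show "Lc P (Q^2)" by (intro Lc_pow LQ)
        show "Mc P P (D0 - w*Q*inverse Q^N)" unfolding lam by (rule Mc_mult[OF Llam Mu2])
      qed
      show ?thesis unfolding e e2
      proof (rule frac_Mc)
        show "Mc P P (qpoch u Q k * (qpoch w Q k * qpoch y Q k * Q^k) -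
                       qpoch (inverse Q^N) Q k * (qpoch w Q k * qpoch y Q k * Q^k))"
          using Mc_mult2[OF LT m1] by (simp add: algebra_simps)
        show "Mc P P (qpoch Q Q k * qpoch D0 (Q^2) k - qpoch Q Q k * qpoch (w*Q*inverse Q^N) (Q^2) k)"
          using Mc_mult[OF qpoch_Lc[OF LQ LQ] m2] by (simp add: algebra_simps)
      next
        show "Lc P (qpoch u Q k * (qpoch w Q k * qpoch y Q k * Q^k))" by (rule Lc_mult[OF qpoch_Lc[OF Lu LQ] LT])
      next
        show "Lc P (qpoch (inverse Q^N) Q k * (qpoch w Q k * qpoch y Q k * Q^k))" by (rule Lc_mult[OF qpoch_Lc[OF LiQ LQ] LT])
      qed (rule Ud1, rule Ud2)
    qed
    have high: "Mc P P (T y k)" if "N < k" for k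
    proof -
      define R where "R = (qpoch u Q N * qpoch (u * Q^Suc N) Q (k - Suc N)) *
          (qpoch w Q k * qpoch y Q k * Q^k) / (qpoch Q Q k * qpoch D0 (Q^2) k)"
      have eqT: "T y k = (1 - u * Q^N) * R"
        unfolding T_def R_def qpoch_split[OF that, of u Q] by (simp add: mult_ac)
      have LR: "Lc P R" unfolding R_def
        by (rule Lc_div[OF Lc_mult[OF Lc_mult[OF qpoch_Lc[OF Lu LQ] qpoch_Lc[OF Lc_mult[OF Lu Lc_pow[OF LQ]] LQ]] LT] Ud1])
      show ?thesis unfolding eqT by (rule Mc_mult2[OF LR Mu])
    qed
    have split: "(\<Sum>k<n. T y k) = (\<Sum>k<Suc N. T y k) + (\<Sum>k\<in>{Suc N..<n}. T y k)"
    proof -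
      have "{..<n} = {..<Suc N} \<union> {Suc N..<n}" using Nn by auto
      hence "(\<Sum>k<n. T y k) = sum (T y) ({..<Suc N} \<union> {Suc N..<n})" by (simp only:)
      also have "\<dots> = sum (T y) {..<Suc N} + sum (T y) {Suc N..<n}" by (rule sum.union_disjoint) auto
      finally show ?thesis .
    qed
    have "(\<Sum>k<n. T y k) - (\<Sum>k<Suc N. bt Q N w k * qpoch y Q k) =
       (\<Sum>k<Suc N. T y k - bt Q N w k * qpoch y Q k) + (\<Sum>k\<in>{Suc N..<n}. T y k)"
      unfolding split sum_subtractf by simp
    moreover have "Mc P P (\<Sum>k<Suc N. T y k - bt Q N w k * qpoch y Q k)" by (rule Mc_sum[OF low])
    moreover have "Mc P P (\<Sum>k\<in>{Suc N..<n}. T y k)" by (rule Mc_sum[OF high]) auto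
    ultimately show ?thesis by (simp only:) (rule Mc_add)
  qed
  have q: "(\<Sum>k<Suc N. bt Q N w k * qpoch x Q k) = (-1)^N * (\<Sum>k<Suc N. bt Q N w k * qpoch (-x) Q k)"
    by (rule qid[OF g])
  have "(\<Sum>k<n. T x k) - (-1)^N * (\<Sum>k<n. T (-x) k) =
    ((\<Sum>k<n. T x k) - (\<Sum>k<Suc N. bt Q N w k * qpoch x Q k))
    - (-1)^N * ((\<Sum>k<n. T (-x) k) - (\<Sum>k<Suc N. bt Q N w k * qpoch (-x) Q k))"
    using q by (simp add: algebra_simps)
  moreover have "Mc P P (((\<Sum>k<n. T x k) - (\<Sum>k<Suc N. bt Q N w k * qpoch x Q k))
    - (-1)^N * ((\<Sum>k<n. T (-x) k) - (\<Sum>k<Suc N. bt Q N w k * qpoch (-x) Q k)))"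
    by (rule Mc_diff[OF main[OF Lx] Mc_mult[OF Lc_pow[OF Lc_minus[OF Lc_1]] main[OF Lc_minus[OF Lx]]]])
  ultimately show ?thesis by (simp only:)
qed



lemma lnres_prop:
  fixes A :: int and D n t :: nat
  assumes D: "0 < D" and cDn: "coprime D n"
  shows "(let (u, v) = quotient_of (of_int A / of_int (int D) - of_nat t) in coprime v (int n) \<and> int n dvd u)
     \<longleftrightarrow> int n dvd A - int D * int t"
proof -
  obtain u v where uv: "quotient_of (of_int A / of_int (int D) - of_nat t) = (u, v)" by (cases "quotient_of (of_int A / of_int (int D) - of_nat t)")
  have vpos: "v > 0" using quotient_of_denom_pos[OF uv] .
  have cuv: "coprime u v" using quotient_of_coprime[OF uv] .
  have "of_int A / of_int (int D) - of_nat t = (of_int u / of_int v :: rat)" using quotient_of_div[OF uv] .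
  moreover have "of_int A / of_int (int D) - of_nat t = (of_int (A - int D * int t) / of_int (int D) :: rat)"
    using D by (simp add: field_simps)
  ultimately have "(of_int (A - int D * int t) / of_int (int D) :: rat) = of_int u / of_int v" by simp
  hence "(of_int ((A - int D * int t) * v) :: rat) = of_int (u * int D)" using D vpos
    by (simp add: field_simps)
  hence key: "(A - int D * int t) * v = u * int D" by (simp only: of_int_eq_iff)
  have cDn': "coprime (int D) (int n)" using cDn by simp
  define N where "N = A - int D * int t"
  have key': "N * v = u * int D" using key unfolding N_def .
  have "(coprime v (int n) \<and> int n dvd u) \<longleftrightarrow> int n dvd N"
  proof
    assume h: "coprime v (int n) \<and> int n dvd u"
    hence "int n dvd N * v" unfolding key' by simp
    thus "int n dvd N" using h by (simp add: coprime_commute coprime_dvd_mult_left_iff)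
  next
    assume h: "int n dvd N"
    have "v dvd u * int D" unfolding key'[symmetric] by simp
    hence vD: "v dvd int D" using cuv by (simp add: coprime_commute coprime_dvd_mult_right_iff)
    have c1: "coprime v (int n)" by (rule coprime_divisors[OF vD dvd_refl cDn'])
    have "int n dvd u * int D" unfolding key'[symmetric] using h by simp
    hence "int n dvd u" using cDn' by (simp add: coprime_commute coprime_dvd_mult_left_iff)
    with c1 show "coprime v (int n) \<and> int n dvd u" by simp
  qed
  thus ?thesis unfolding uv N_def by simp
qed

lemma lnres_eq:
  fixes A :: int and D n t :: nat
  assumes D: "0 < D" and cDn: "coprime D n" and tn: "t < n" and dv: "int n dvd A - int D * int t"
  shows "lnres (of_int A / of_int (int D)) n = t"
  unfolding lnres_def
proof (rule the_equality)
  show "t < n \<and> (let (u, v) = quotient_of (of_int A / of_int (int D) - of_nat t) in coprime v (int n) \<and> int n dvd u)"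
    using tn dv lnres_prop[OF D cDn] by simp
next
  fix t' assume "t' < n \<and> (let (u, v) = quotient_of (of_int A / of_int (int D) - of_nat t') in coprime v (int n) \<and> int n dvd u)"
  hence t'n: "t' < n" and dv': "int n dvd A - int D * int t'" using lnres_prop[OF D cDn] by auto
  have "int n dvd (A - int D * int t') - (A - int D * int t)" using dv dv' by (rule dvd_diff[rotated])
  hence "int n dvd int D * (int t - int t')" by (simp add: algebra_simps)
  hence "int n dvd int t - int t'" using cDn by (simp add: coprime_commute coprime_dvd_mult_right_iff)
  moreover have "\<bar>int t - int t'\<bar> < int n" using tn t'n by simp
  ultimately have "int t - int t' = 0"
  proof (rule_tac ccontr)
    assume a: "int n dvd int t - int t'" "\<bar>int t - int t'\<bar> < int n" "int t - int t' \<noteq> 0"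
    have "\<bar>int n\<bar> \<le> \<bar>int t - int t'\<bar>" by (rule dvd_imp_le_int[OF a(3) a(1)])
    thus False using a(2) by simp
  qed
  thus "t' = t" by simp
qed

lemma lnres_ex:
  fixes A :: int and D n :: nat
  assumes D: "0 < D" and n: "0 < n" and cDn: "coprime D n"
  shows "\<exists>t<n. int n dvd A - int D * int t"
proof -
  have "coprime (int D) (int n)" using cDn by simp
  then obtain y where y: "[int D * y = 1] (mod int n)" using cong_solve_coprime_int by blast
  define t where "t = nat ((A * y) mod int n)"
  have t0: "int t = (A * y) mod int n" using n by (simp add: t_def)
  have tn: "t < n" using n t0 by (simp add: t_def nat_less_iff)
  have "[int D * int t = int D * (A * y)] (mod int n)" unfolding t0 by (simp add: cong_def mod_mult_right_eq)
  moreover have "[int D * (A * y) = A * (int D * y)] (mod int n)" by (simp add: mult_ac)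
  moreover have "[A * (int D * y) = A * 1] (mod int n)" using y by (rule cong_scalar_left)
  ultimately have "[int D * int t = A] (mod int n)" by (metis cong_trans mult_1_right)
  hence "int n dvd A - int D * int t" by (simp add: cong_iff_dvd_diff dvd_diff_commute)
  thus ?thesis using tn by blast
qed



lemma L_Q: "(q::'a::field) \<noteq> 0 \<Longrightarrow> (q^d)^k = q powi (int d * int k)"
  by (simp add: power_mult[symmetric] of_nat_mult[symmetric] del: of_nat_mult)
lemma L_iQ: "(q::'a::field) \<noteq> 0 \<Longrightarrow> inverse (q^d)^k = q powi (- (int d * int k))"
  by (simp add: power_int_minus power_mult[symmetric] power_inverse of_nat_mult[symmetric] del: of_nat_mult)
lemma L_add: "(q::'a::field) \<noteq> 0 \<Longrightarrow> q powi z1 * q powi z2 = q powi (z1 + z2)"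
  by (simp add: power_int_add)

lemma Vq_nz: "Vq \<noteq> 0" by (simp add: Vq_def)
lemma q_nz: "emb Vq \<noteq> 0" by (simp add: emb_eq0 Vq_nz)

lemma nz1: "0 < k \<or> (i, j) \<noteq> (0::nat, 0::nat) \<Longrightarrow> 1 - Va^i*Vb^j*Vq^k \<noteq> 0"
proof -
  assume h: "0 < k \<or> (i, j) \<noteq> (0::nat, 0::nat)"
  have "1 - [:a2^i*b2^j:]*X3^k \<noteq> 0"
  proof (cases "0 < k")
    case True
    have c: "coeff (1 - [:a2^i*b2^j:]*X3^k) 0 = 1" using coeff_one_minus[OF True] .
    show ?thesis using c by (metis coeff_0 zero_neq_one)
  next
    case False
    hence "a2^i*b2^j \<noteq> a2^0*b2^0" using h unfolding MI by simp
    thus ?thesis using False by (simp add: const_one_diff)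
  qed
  thus ?thesis unfolding conv1 by simp
qed

lemma nz2: "0 < g \<Longrightarrow> Vq^g - Va^i*Vb^j \<noteq> 0"
proof -
  assume g: "0 < g"
  have "X3^g - [:a2^i*b2^j:] \<noteq> 0" using coeff_X_minus[OF g, of "a2^i*b2^j"] by auto
  thus ?thesis unfolding conv2 by simp
qed

lemma mono_ne1:
  assumes "(i, j) \<noteq> (0::nat, 0::nat)"
  shows "emb (Va^i*Vb^j) * emb Vq powi z \<noteq> 1"
proof (cases "0 \<le> z")
  case True
  have "emb (Va^i*Vb^j) * emb Vq powi z = emb (Va^i*Vb^j*Vq^nat z)"
    using True by (simp add: emb_simps power_int_def)
  moreover have "Va^i*Vb^j*Vq^nat z \<noteq> 1" using nz1[of "nat z" i j] assms by auto
  ultimately show ?thesis by (metis emb_1 emb_eq)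
next
  case False
  define g where "g = nat (-z)"
  have g: "0 < g" using False by (simp add: g_def)
  have "emb Vq powi z = inverse (emb (Vq^g))" using False by (simp add: g_def power_int_def emb_simps power_inverse)
  hence e: "emb (Va^i*Vb^j) * emb Vq powi z = emb (Va^i*Vb^j) / emb (Vq^g)" by (simp add: divide_inverse)
  have "emb (Vq^g) \<noteq> 0" by (simp add: emb_simps q_nz)
  moreover have "Va^i*Vb^j \<noteq> Vq^g" using nz2[OF g, of i j] by auto
  ultimately show ?thesis unfolding e by (metis divide_self_if emb_eq eq_divide_eq mult_1)
qed

lemma Uc_binom:
  assumes nz: "(i, j) \<noteq> (0::nat, 0::nat)"
    and c1: "0 \<le> z \<Longrightarrow> coprime (1 - Va^i*Vb^j*Vq^(nat z)) P"
    and c2: "z < 0 \<Longrightarrow> coprime (Vq^(nat(-z)) - Va^i*Vb^j) P"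
    and cq: "coprime Vq P"
  shows "Uc P (1 - emb (Va^i*Vb^j) * emb Vq powi z)"
proof (cases "0 \<le> z")
  case True
  have "1 - emb (Va^i*Vb^j) * emb Vq powi z = emb (1 - Va^i*Vb^j*Vq^nat z)"
    using True by (simp add: emb_simps power_int_def)
  thus ?thesis using Uc_emb[OF nz1 c1[OF True]] nz by simp
next
  case False
  define g where "g = nat (-z)"
  have g: "0 < g" using False by (simp add: g_def)
  have "emb Vq powi z = inverse (emb (Vq^g))" using False by (simp add: g_def power_int_def emb_simps power_inverse)
  hence e: "1 - emb (Va^i*Vb^j) * emb Vq powi z = emb (Vq^g - Va^i*Vb^j) / emb (Vq^g)"
    using q_nz by (simp add: emb_simps field_simps)
  have zl: "z < 0" using False by simp
  have u1: "Uc P (emb (Vq^g - Va^i*Vb^j))"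
    using Uc_emb[OF nz2[OF g] c2[OF zl, folded g_def]] .
  have u2: "Uc P (emb (Vq^g))"
    using Uc_emb[of "Vq^g" P] cq Vq_nz by simp
  show ?thesis unfolding e using u1 u2 by (rule Uc_div)
qed

definition good :: "mpoly4 \<Rightarrow> bool" where
  "good P \<longleftrightarrow> coprime Vq P \<and> (\<forall>J>0. coprime (1 - Vq^J) P) \<and> (\<forall>J>0. coprime (1 - Va*Vb*Vq^J) P)"

lemma good_mult: "good P1 \<Longrightarrow> good P2 \<Longrightarrow> good (P1*P2)"
  unfolding good_def by simp

lemma good_Uq: "good P \<Longrightarrow> Uc P (emb Vq)"
  unfolding good_def using Uc_emb Vq_nz by blast

lemma good_Lpowi: "good P \<Longrightarrow> Lc P (emb Vq powi z)"
proof -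
  assume g: "good P"
  have U: "Uc P (emb Vq)" using good_Uq[OF g] .
  show ?thesis
  proof (cases "0 \<le> z")
    case True thus ?thesis using Lc_pow[OF Uc_Lc[OF U], of "nat z"] by (simp add: power_int_def)
  next
    case False thus ?thesis using Lc_pow[OF Uc_Lc[OF Uc_inv[OF U]], of "nat (-z)"] by (simp add: power_int_def)
  qed
qed

lemma good_U1: assumes g: "good P" and d: "0 < d"
  shows "Uc P (1 - emb Vq^d * (emb Vq^d)^i)"
proof -
  have "1 - emb Vq^d * (emb Vq^d)^i = emb (1 - Vq^(d * Suc i))"
    by (simp add: emb_simps power_mult[symmetric] power_add[symmetric])
  moreover have "coprime (1 - Vq^(d * Suc i)) P" using g d unfolding good_def by simp
  moreover have "1 - Vq^(d * Suc i) \<noteq> 0" using nz1[of "d * Suc i" 0 0] d by simp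
  ultimately show ?thesis by (simp add: Uc_emb)
qed

lemma good_U2: assumes g: "good P" and d: "0 < d"
  shows "Uc P (1 - emb Va * emb Vb * (emb Vq^d)^2 * ((emb Vq^d)^2)^i)"
proof -
  have "1 - emb Va * emb Vb * (emb Vq^d)^2 * ((emb Vq^d)^2)^i = emb (1 - Va*Vb*Vq^(2*d * Suc i))"
    by (simp add: emb_simps power_mult[symmetric] power_add[symmetric] mult_ac)
  moreover have "coprime (1 - Va*Vb*Vq^(2*d * Suc i)) P" using g d unfolding good_def by simp
  moreover have "1 - Va*Vb*Vq^(2*d * Suc i) \<noteq> 0" using nz1[of "2*d * Suc i" 1 1] d by simp
  ultimately show ?thesis by (simp add: Uc_emb)
qed



lemma cpA1: "0 < m \<Longrightarrow> coprime Vq (1 - Va*Vq^m)"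
  using Xm1[of m 1 0] by simp
lemma cpA2: "0 < J \<Longrightarrow> 0 < m \<Longrightarrow> coprime (1 - Vq^J) (1 - Va*Vq^m)"
  using BBm[where ?i1.0=0 and ?j1.0=0 and k=J and ?i2.0=1 and ?j2.0=0 and l=m] by simp
lemma cpA3: "0 < m \<Longrightarrow> coprime (1 - Va*Vb*Vq^J) (1 - Va*Vq^m)"
  using BBm[where ?i1.0=1 and ?j1.0=1 and k=J and ?i2.0=1 and ?j2.0=0 and l=m] by simp
lemma cpA4: "0 < m \<Longrightarrow> coprime (1 - Vb*Vq^k) (1 - Va*Vq^m)"
  using BBm[where ?i1.0=0 and ?j1.0=1 and k=k and ?i2.0=1 and ?j2.0=0 and l=m] by simp
lemma cpA5: "0 < g \<Longrightarrow> 0 < m \<Longrightarrow> coprime (Vq^g - Vb) (1 - Va*Vq^m)"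
  using BB'm[where e=g and ?i1.0=0 and ?j1.0=1 and ?i2.0=1 and ?j2.0=0 and l=m] by simp

lemma cpB1: "coprime Vq (1 - Vb*Vq^e)"
  using Xm1[of e 0 1] by simp
lemma cpB2: "0 < J \<Longrightarrow> coprime (1 - Vq^J) (1 - Vb*Vq^e)"
  using BBm[where ?i1.0=0 and ?j1.0=0 and k=J and ?i2.0=0 and ?j2.0=1 and l=e] by simp
lemma cpB3: "0 < J \<Longrightarrow> coprime (1 - Va*Vb*Vq^J) (1 - Vb*Vq^e)"
  using BBm[where ?i1.0=1 and ?j1.0=1 and k=J and ?i2.0=0 and ?j2.0=1 and l=e] by auto
lemma cpB4: "0 < k \<or> 0 < e \<Longrightarrow> coprime (1 - Va*Vq^k) (1 - Vb*Vq^e)"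
  using BBm[where ?i1.0=1 and ?j1.0=0 and k=k and ?i2.0=0 and ?j2.0=1 and l=e] by auto
lemma cpB5: "0 < g \<Longrightarrow> coprime (Vq^g - Va) (1 - Vb*Vq^e)"
  using BB'm[where e=g and ?i1.0=1 and ?j1.0=0 and ?i2.0=0 and ?j2.0=1 and l=e] by simp

lemma cpC1: "0 < h \<Longrightarrow> coprime Vq (Vq^h - Vb)"
  using Xm2[of h 0 1] by simp
lemma cpC2: "0 < J \<Longrightarrow> 0 < h \<Longrightarrow> coprime (1 - Vq^J) (Vq^h - Vb)"
  using BB'm[where e=h and ?i1.0=0 and ?j1.0=1 and ?i2.0=0 and ?j2.0=0 and l=J] by (simp add: coprime_commute)
lemma cpC3: "0 < h \<Longrightarrow> coprime (1 - Va*Vb*Vq^J) (Vq^h - Vb)"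
  using BB'm[where e=h and ?i1.0=0 and ?j1.0=1 and ?i2.0=1 and ?j2.0=1 and l=J] by (simp add: coprime_commute)
lemma cpC4: "0 < h \<Longrightarrow> coprime (1 - Va*Vq^k) (Vq^h - Vb)"
  using BB'm[where e=h and ?i1.0=0 and ?j1.0=1 and ?i2.0=1 and ?j2.0=0 and l=k] by (simp add: coprime_commute)
lemma cpC5: "0 < g \<Longrightarrow> 0 < h \<Longrightarrow> coprime (Vq^g - Va) (Vq^h - Vb)"
  using BB''m[where e=g and ?i1.0=1 and ?j1.0=0 and f=h and ?i2.0=0 and ?j2.0=1] by simp



lemma goodA: "0 < m \<Longrightarrow> good (1 - Va*Vq^m)"
  unfolding good_def using cpA1 cpA2 cpA3 by (simp add: coprime_commute)

lemma goodB: "good (qfac Vb e)"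
proof (cases "0 \<le> e")
  case True thus ?thesis unfolding good_def qfac_def using cpB1 cpB2 cpB3 by simp
next
  case False
  hence h: "0 < nat (-e)" by simp
  show ?thesis unfolding good_def qfac_def using False cpC1[OF h] cpC2[OF _ h] cpC3[OF h] by simp
qed

lemma cop12: "0 < m \<Longrightarrow> coprime (1 - Va*Vq^m) (qfac Vb e)"
proof (cases "0 \<le> e")
  case True
  assume "0 < m" thus ?thesis unfolding qfac_def using True cpB4[of m "nat e"] by simp
next
  case False
  assume "0 < m"
  hence h: "0 < nat (-e)" using False by simp
  thus ?thesis unfolding qfac_def using False cpC4[OF h, of m] by simp
qed

lemma Lc_T:
  assumes g: "good P" and d: "0 < d" and y: "Lc P y"
  shows "Lc P (qpoch (emb Va * emb Vq^r) (emb Vq^d) k * qpoch (emb Vb * emb Vq powi z) (emb Vq^d) k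
     * qpoch y (emb Vq^d) k * (emb Vq^d)^k / (qpoch (emb Vq^d) (emb Vq^d) k *
       qpoch (emb Va * emb Vb * (emb Vq^d)^2) ((emb Vq^d)^2) k))"
proof -
  have LQ: "Lc P (emb Vq^d)" by (rule Lc_pow[OF Lc_emb])
  show ?thesis
    by (intro Lc_div Lc_mult qpoch_Lc Lc_emb Lc_pow LQ good_Lpowi[OF g] y Uc_mult qpoch_Uc
        good_U1[OF g d] good_U2[OF g d])
qed

lemma pow_helper:
  "emb Vq powi z1 * (emb Vq^d) * inverse (emb Vq^d)^s * ((emb Vq^d)^2)^i
    = emb Vq powi (z1 + int d - int d * int s + 2 * int d * int i)"
proof -
  have e1: "emb Vq^d = emb Vq powi (int d)" by simp
  have e2: "inverse (emb Vq^d)^s = emb Vq powi (- (int d * int s))" by (rule L_iQ[OF q_nz])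
  have e3: "((emb Vq^d)^2)^i = emb Vq powi (int d * int (2*i))"
    using L_Q[OF q_nz, of d "2*i"] by (simp add: power_mult)
  have "emb Vq powi z1 * (emb Vq^d) * inverse (emb Vq^d)^s * ((emb Vq^d)^2)^i =
     emb Vq powi z1 * emb Vq powi (int d) * emb Vq powi (- (int d * int s)) * emb Vq powi (int d * int (2*i))"
    unfolding e2 e3 by simp
  also have "\<dots> = emb Vq powi (z1 + int d + (- (int d * int s)) + int d * int (2*i))"
    by (simp only: L_add[OF q_nz])
  also have "z1 + int d + (- (int d * int s)) + int d * int (2*i) = z1 + int d - int d * int s + 2 * int d * int i"
    by simp
  finally show ?thesis .
qed

lemma gen_mono:
  assumes d: "0 < d" and ij: "(i, j) \<noteq> (0::nat, 0::nat)"
  shows "gen (emb Vq^d) (emb (Va^i*Vb^j) * emb Vq powi z)"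
  unfolding gen_def
proof (intro conjI allI impI)
  show "emb Vq ^ d \<noteq> 0" using q_nz by simp
next
  fix J :: nat assume J: "0 < J"
  have "(emb Vq ^ d) ^ J = emb (Vq^(d*J))" by (simp add: emb_simps power_mult)
  moreover have "Vq^(d*J) \<noteq> 1" using nz1[of "d*J" 0 0] J d by simp
  ultimately show "(emb Vq ^ d) ^ J \<noteq> 1" by (metis emb_1 emb_eq)
next
  fix i' :: int
  have e1: "(emb Vq ^ d) powi i' = emb Vq powi (int d * i')"
    by (simp add: power_int_mult)
  have e2: "emb Vq powi z * emb Vq powi (int d * i') = emb Vq powi (z + int d * i')" by (rule L_add[OF q_nz])
  have e3: "emb (Va^i*Vb^j) * emb Vq powi z * (emb Vq ^ d) powi i' = emb (Va^i*Vb^j) * emb Vq powi (z + int d * i')"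
    unfolding e1 mult.assoc e2 ..
  show "emb (Va^i*Vb^j) * emb Vq powi z * (emb Vq ^ d) powi i' \<noteq> 1" unfolding e3 by (rule mono_ne1[OF ij])
qed

lemma mainA:
  fixes d r s n :: nat
  assumes d: "0 < d" and sn: "s < n" and r: "0 < r"
  defines "Q \<equiv> emb Vq ^ d"
  defines "T \<equiv> \<lambda>y k. qpoch (emb Va * emb Vq^r) Q k * qpoch (emb Vb * emb Vq powi (int d - int r)) Q k
     * qpoch y Q k * Q^k / (qpoch Q Q k * qpoch (emb Va * emb Vb * Q^2) (Q^2) k)"
  shows "Mc (1 - Va*Vq^(r + d*s)) (1 - Va*Vq^(r+d*s))
     ((\<Sum>k<n. T (emb Vx) k) - (-1)^s * (\<Sum>k<n. T (- emb Vx) k))"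
proof -
  define m where "m = r + d*s"
  define P where "P = 1 - Va*Vq^m"
  have m0: "0 < m" using r by (simp add: m_def)
  have g: "good P" unfolding P_def using goodA[OF m0] .
  have cq: "coprime Vq P" using g unfolding good_def by simp
  have wq: "emb Vq powi (int d - int r) = emb Vq^d * inverse (emb Vq^r)"
    using q_nz by (simp add: power_int_diff divide_inverse)
  have "Mc P P ((\<Sum>k<n. T (emb Vx) k) - (-1)^s * (\<Sum>k<n. T (- emb Vx) k))"
    unfolding T_def
  proof (rule side[where lam = "emb Vb * Q^2 * inverse (emb Vq^r)"])
    show "s < n" by (rule sn)
    show "Lc P (emb Va * emb Vq ^ r)" by (intro Lc_mult Lc_emb Lc_pow)
    show "Lc P (emb Vb * emb Vq powi (int d - int r))" by (intro Lc_mult Lc_emb good_Lpowi[OF g])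
    show "Lc P (emb Vx)" by (rule Lc_emb)
    show "Uc P Q" unfolding Q_def by (intro Uc_pow good_Uq[OF g])
    show "Uc P (1 - Q * Q^i)" for i unfolding Q_def by (rule good_U1[OF g d])
    show "Uc P (1 - emb Va * emb Vb * Q^2 * (Q^2)^i)" for i unfolding Q_def by (rule good_U2[OF g d])
    show "Uc P (1 - emb Vb * emb Vq powi (int d - int r) * Q * inverse Q ^ s * (Q^2)^i)" for i
    proof -
      define z where "z = int d - int r + int d - int d * int s + 2 * int d * int i"
      have e: "emb Vb * emb Vq powi (int d - int r) * Q * inverse Q ^ s * (Q^2)^i = emb (Va^0*Vb^1) * emb Vq powi z"
        using pow_helper[of "int d - int r" d s i] unfolding Q_def z_def by (simp add: mult.assoc)
      have "Uc P (1 - emb (Va^0*Vb^1) * emb Vq powi z)"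
      proof (rule Uc_binom[OF _ _ _ cq])
        show "(0::nat, 1::nat) \<noteq> (0, 0)" by simp
        show "coprime (1 - Va^0*Vb^1*Vq^nat z) P" unfolding P_def using cpA4[OF m0] by simp
        show "coprime (Vq^nat (-z) - Va^0*Vb^1) P" if "z < 0" unfolding P_def using cpA5[OF _ m0] that by simp
      qed
      thus ?thesis unfolding e .
    qed
    show "Mc P P (1 - emb Va * emb Vq ^ r * Q ^ s)"
    proof -
      have "1 - emb Va * emb Vq ^ r * Q ^ s = emb P"
        unfolding P_def m_def Q_def by (simp add: emb_simps power_add power_mult mult.assoc)
      thus ?thesis using Mc_P by simp
    qed
    show "emb Va * emb Vb * Q^2 - emb Vb * emb Vq powi (int d - int r) * Q * inverse Q ^ s =
        emb Vb * Q^2 * inverse (emb Vq^r) * (emb Va * emb Vq^r - inverse Q ^ s)"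
      unfolding wq Q_def using q_nz by (simp add: field_simps power2_eq_square)
    show "Lc P (emb Vb * Q^2 * inverse (emb Vq^r))"
      unfolding Q_def by (intro Lc_mult Lc_emb Lc_pow Uc_Lc Uc_inv Uc_pow good_Uq[OF g])
    show "gen Q (emb Vb * emb Vq powi (int d - int r))"
      using gen_mono[OF d, of 0 1 "int d - int r"] unfolding Q_def by simp
  qed
  thus ?thesis unfolding P_def m_def .
qed

lemma mainB:
  fixes d r t n :: nat and e :: int
  assumes d: "0 < d" and tn: "t < n" and e: "e = int d - int r + int d * int t"
  defines "Q \<equiv> emb Vq ^ d"
  defines "T \<equiv> \<lambda>y k. qpoch (emb Va * emb Vq^r) Q k * qpoch (emb Vb * emb Vq powi (int d - int r)) Q k
     * qpoch y Q k * Q^k / (qpoch Q Q k * qpoch (emb Va * emb Vb * Q^2) (Q^2) k)"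
  shows "Mc (qfac Vb e) (qfac Vb e)
     ((\<Sum>k<n. T (emb Vx) k) - (-1)^t * (\<Sum>k<n. T (- emb Vx) k))"
proof -
  define P where "P = qfac Vb e"
  have g: "good P" unfolding P_def by (rule goodB)
  have cq: "coprime Vq P" using g unfolding good_def by simp
  have wq: "emb Vq powi (int d - int r) = emb Vq^d * inverse (emb Vq^r)"
    using q_nz by (simp add: power_int_diff divide_inverse)
  define T' where "T' = (\<lambda>y k. qpoch (emb Vb * emb Vq powi (int d - int r)) Q k * qpoch (emb Va * emb Vq^r) Q k
     * qpoch y Q k * Q^k / (qpoch Q Q k * qpoch (emb Va * emb Vb * Q^2) (Q^2) k))"
  have TT: "T y k = T' y k" for y k unfolding T_def T'_def by (simp add: mult_ac)
  have "Mc P P ((\<Sum>k<n. T' (emb Vx) k) - (-1)^t * (\<Sum>k<n. T' (- emb Vx) k))"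
    unfolding T'_def
  proof (rule side[where lam = "emb Va * emb Vq^d * emb Vq^r"])
    show "t < n" by (rule tn)
    show "Lc P (emb Va * emb Vq ^ r)" by (intro Lc_mult Lc_emb Lc_pow)
    show "Lc P (emb Vb * emb Vq powi (int d - int r))" by (intro Lc_mult Lc_emb good_Lpowi[OF g])
    show "Lc P (emb Vx)" by (rule Lc_emb)
    show "Uc P Q" unfolding Q_def by (intro Uc_pow good_Uq[OF g])
    show "Uc P (1 - Q * Q^i)" for i unfolding Q_def by (rule good_U1[OF g d])
    show "Uc P (1 - emb Va * emb Vb * Q^2 * (Q^2)^i)" for i unfolding Q_def by (rule good_U2[OF g d])
    show "Uc P (1 - emb Va * emb Vq ^ r * Q * inverse Q ^ t * (Q^2)^i)" for i
    proof -
      define z where "z = int r + int d - int d * int t + 2 * int d * int i"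
      have ze: "z + e = 2 * int d * (int i + 1)" unfolding z_def e by (simp add: algebra_simps)
      have e1: "emb Va * emb Vq ^ r * Q * inverse Q ^ t * (Q^2)^i = emb (Va^1*Vb^0) * emb Vq powi z"
        using pow_helper[of "int r" d t i] unfolding Q_def z_def by (simp add: mult.assoc)
      have "Uc P (1 - emb (Va^1*Vb^0) * emb Vq powi z)"
      proof (rule Uc_binom[OF _ _ _ cq])
        show "(1::nat, 0::nat) \<noteq> (0, 0)" by simp
        show "coprime (1 - Va^1*Vb^0*Vq^nat z) P" if z0: "0 \<le> z"
        proof (cases "0 \<le> e")
          case True
          have pos: "0 < 2 * int d * (int i + 1)" using d by simp
          have "0 < nat z \<or> 0 < nat e" using ze z0 True pos by (cases "z = 0") auto
          thus ?thesis unfolding P_def qfac_def using True cpB4[of "nat z" "nat e"] by simp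
        next
          case False
          hence h: "0 < nat (-e)" by simp
          thus ?thesis unfolding P_def qfac_def using False cpC4[OF h, of "nat z"] by simp
        qed
        show "coprime (Vq^nat (-z) - Va^1*Vb^0) P" if z0: "z < 0"
        proof -
          have h1: "0 < nat (-z)" using z0 by simp
          show ?thesis
          proof (cases "0 \<le> e")
            case True thus ?thesis unfolding P_def qfac_def using cpB5[OF h1, of "nat e"] by simp
          next
            case False
            hence h: "0 < nat (-e)" by simp
            thus ?thesis unfolding P_def qfac_def using False cpC5[OF h1 h] by simp
          qed
        qed
      qed
      thus ?thesis unfolding e1 .
    qed
    show "Mc P P (1 - emb Vb * emb Vq powi (int d - int r) * Q ^ t)"
    proof -
      have "emb Vq powi (int d - int r) * Q^t = emb Vq powi e"
        unfolding Q_def L_Q[OF q_nz] L_add[OF q_nz] e by simp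
      hence be: "1 - emb Vb * emb Vq powi (int d - int r) * Q ^ t = 1 - emb Vb * emb Vq powi e"
        by (simp add: mult.assoc)
      show ?thesis
      proof (cases "0 \<le> e")
        case True
        have "1 - emb Vb * emb Vq powi e = emb P"
          unfolding P_def qfac_def using True by (simp add: emb_simps power_int_def)
        thus ?thesis unfolding be using Mc_P by simp
      next
        case False
        define h where "h = nat (-e)"
        have "emb Vq powi e = inverse (emb Vq ^ h)" using False by (simp add: h_def power_int_def power_inverse)
        hence "1 - emb Vb * emb Vq powi e = emb P * inverse (emb Vq ^ h)"
          unfolding P_def qfac_def using False q_nz by (simp add: h_def emb_simps field_simps)
        moreover have "Lc P (inverse (emb Vq ^ h))" by (intro Uc_Lc Uc_inv Uc_pow good_Uq[OF g])
        ultimately show ?thesis unfolding be using Mc_mult2[OF _ Mc_P] by simp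
      qed
    qed
    show "emb Va * emb Vb * Q^2 - emb Va * emb Vq ^ r * Q * inverse Q ^ t =
        emb Va * emb Vq^d * emb Vq^r * (emb Vb * emb Vq powi (int d - int r) - inverse Q ^ t)"
      unfolding wq Q_def using q_nz by (simp add: field_simps power2_eq_square)
    show "Lc P (emb Va * emb Vq^d * emb Vq^r)" by (intro Lc_mult Lc_emb Lc_pow)
    show "gen Q (emb Va * emb Vq ^ r)"
      using gen_mono[OF d, of 1 0 "int r"] unfolding Q_def by simp
  qed
  thus ?thesis unfolding P_def TT .
qed



theorem theorem1p3:
  fixes d n r :: nat
  assumes "0 < d" and "0 < n" and "0 < r" and "coprime d n" and "odd n"
  shows "rcong
    (\<Sum>k<n. qpoch (emb Va * emb Vq ^ r) (emb Vq ^ d) k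
             * qpoch (emb Vb * emb Vq powi (int d - int r)) (emb Vq ^ d) k
             * qpoch (emb Vx) (emb Vq ^ d) k * emb Vq ^ (d * k)
           / (qpoch (emb Vq ^ d) (emb Vq ^ d) k
              * qpoch (emb Va * emb Vb * emb Vq ^ (2 * d)) (emb Vq ^ (2 * d)) k))
    ((-1) ^ lnres (- of_nat r / of_nat d) n *
     (\<Sum>k<n. qpoch (emb Va * emb Vq ^ r) (emb Vq ^ d) k
             * qpoch (emb Vb * emb Vq powi (int d - int r)) (emb Vq ^ d) k
             * qpoch (- emb Vx) (emb Vq ^ d) k * emb Vq ^ (d * k)
           / (qpoch (emb Vq ^ d) (emb Vq ^ d) k
              * qpoch (emb Va * emb Vb * emb Vq ^ (2 * d)) (emb Vq ^ (2 * d)) k)))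
    (qfac Va (int r + int d * int (lnres (- of_nat r / of_nat d) n))
     * qfac Vb (int d - int r + int d * int (lnres ((of_nat r - of_nat d) / of_nat d) n)))"
proof -
  note d = assms(1) and n = assms(2) and r = assms(3) and cdn = assms(4) and od = assms(5)
  obtain s where s: "s < n" "int n dvd (- int r) - int d * int s"
    using lnres_ex[OF d n cdn, of "- int r"] by blast
  have ls: "lnres (- of_nat r / of_nat d) n = s"
  proof -
    have "(- of_nat r / of_nat d :: rat) = of_int (- int r) / of_int (int d)" by simp
    thus ?thesis using lnres_eq[OF d cdn s(1) s(2)] by simp
  qed
  define t where "t = n - 1 - s"
  have tn: "t < n" using n by (simp add: t_def)
  have it: "int t = int n - 1 - int s" using s(1) by (simp add: t_def of_nat_diff)
  have lt: "lnres ((of_nat r - of_nat d) / of_nat d) n = t"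
  proof -
    have eqr: "((of_nat r - of_nat d) / of_nat d :: rat) = of_int (int r - int d) / of_int (int d)" by simp
    have dv: "int n dvd (int r - int d) - int d * int t"
    proof -
      have "(int r - int d) - int d * int t = - ((- int r) - int d * int s) - int n * int d"
        unfolding it by (simp add: algebra_simps)
      moreover have "int n dvd - ((- int r) - int d * int s) - int n * int d"
      proof (rule dvd_diff)
        show "int n dvd - ((- int r) - int d * int s)" using s(2) by (simp only: dvd_minus_iff)
      qed simp
      ultimately show ?thesis by (simp only:)
    qed
    show ?thesis unfolding eqr by (rule lnres_eq[OF d cdn tn dv])
  qed
  define m where "m = r + d*s"
  have m0: "0 < m" using r by (simp add: m_def)
  have q1: "qfac Va (int r + int d * int s) = 1 - Va * Vq^m"
    by (simp add: qfac_def m_def nat_add_distrib nat_mult_distrib)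
  define e where "e = int d - int r + int d * int t"
  have sgn: "(-1::rfun4)^t = (-1)^s"
  proof -
    have "t + s = n - 1" using s(1) by (simp add: t_def)
    hence "even (t + s)" using od n by simp
    hence "even t \<longleftrightarrow> even s" by simp
    thus ?thesis by (cases "even s") (simp_all add: neg_one_odd_power)
  qed
  have hQ2: "emb Vq ^ (2*d) = (emb Vq^d)^2"
    unfolding power_mult[symmetric] by (simp add: mult.commute)
  define T where "T = (\<lambda>y k. qpoch (emb Va * emb Vq^r) (emb Vq^d) k
     * qpoch (emb Vb * emb Vq powi (int d - int r)) (emb Vq^d) k
     * qpoch y (emb Vq^d) k * (emb Vq^d)^k / (qpoch (emb Vq^d) (emb Vq^d) k *
       qpoch (emb Va * emb Vb * (emb Vq^d)^2) ((emb Vq^d)^2) k))"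
  define z where "z = (\<Sum>k<n. T (emb Vx) k) - (-1)^s * (\<Sum>k<n. T (- emb Vx) k)"
  have "rcong (\<Sum>k<n. T (emb Vx) k) ((-1)^s * (\<Sum>k<n. T (- emb Vx) k)) ((1 - Va * Vq^m) * qfac Vb e)"
    unfolding rcong_def z_def[symmetric]
  proof (rule combine)
    show "coprime (1 - Va * Vq^m) (qfac Vb e)" by (rule cop12[OF m0])
    have g: "good ((1 - Va * Vq^m) * qfac Vb e)" by (intro good_mult goodA[OF m0] goodB)
    show "Lc ((1 - Va * Vq^m) * qfac Vb e) z" unfolding z_def T_def
      by (intro Lc_diff Lc_mult Lc_sum Lc_T[OF g d] Lc_emb Lc_minus Lc_pow Lc_1)
    show "Mc (1 - Va * Vq^m) (1 - Va * Vq^m) z"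
      using mainA[OF d s(1) r] unfolding z_def T_def m_def by simp
    show "Mc (qfac Vb e) (qfac Vb e) z"
      using mainB[OF d tn e_def] unfolding z_def T_def sgn by simp
  qed
  note main = this
  show ?thesis
    unfolding ls lt q1 e_def[symmetric] unfolding hQ2 unfolding power_mult
    using main unfolding T_def .
qed


end
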